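(* Let $r\ge 0$ and let $k$ be an algebraically closed field of characteristic coprime to $2$ and to $r+1$. Let $A_r=k[[x,y]]/(y^2-x^{r+1})$. Then, up to conjugation by an automorphism of $A_r$, every non-trivial involution $\sigma$ of the $k$-algebra $A_r$ is one of the following: (a) if $r$ is even: $x\mapsto x$, $y\mapsto -y$; (b) if $r$ is odd and $r\ge 3$: one of (b1) $x\mapsto x$, $y\mapsto -y$; (b2) $x\mapsto -x$, $y\mapsto y$; (b3) $x\mapsto -x$, $y\mapsto -y$; (c) if $r=1$: one of (c1) $x\mapsto x$, $y\mapsto -y$; (c2) $x\mapsto -x$, $y\mapsto -y$; (c3) $x\mapsto y$, $y\mapsto x$. *)

theory Defs
  imports "HOL-Algebra.QuotRing" "HOL-Algebra.RingHom"
    "HOL-Computational_Algebra.Formal_Power_Series"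
    "HOL-Computational_Algebra.Polynomial"
begin

definition alg_closed_field :: "'a::field itself \<Rightarrow> bool" where
  "alg_closed_field _ \<longleftrightarrow> (\<forall>p :: 'a poly. degree p \<ge> 1 \<longrightarrow> (\<exists>z. poly p z = 0))"

text \<open>The power series ring k[[x,y]], realised as k[[x]][[y]], as an HOL-Algebra ring.\<close>
definition PS :: "'a::field fps fps ring" where
  "PS = \<lparr>carrier = UNIV, monoid.mult = (\<lambda>a b. a * b), one = 1,
         ring.zero = 0, add = (\<lambda>a b. a + b)\<rparr>"

definition Xv :: "'a::field fps fps" where "Xv = fps_const fps_X"
definition Yv :: "'a::field fps fps" where "Yv = fps_X"

definition Irel :: "nat \<Rightarrow> 'a::field fps fps set" where
  "Irel r = genideal PS {Yv ^ 2 - Xv ^ (r + 1)}"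

definition A_ring :: "nat \<Rightarrow> 'a::field fps fps set ring" where
  "A_ring r = PS Quot (Irel r)"

definition cls :: "nat \<Rightarrow> 'a::field fps fps \<Rightarrow> 'a fps fps set" where
  "cls r f = Irel r +>\<^bsub>PS\<^esub> f"

definition kalg_aut :: "nat \<Rightarrow> ('a::field fps fps set \<Rightarrow> 'a fps fps set) \<Rightarrow> bool" where
  "kalg_aut r s \<longleftrightarrow> s \<in> ring_iso (A_ring r) (A_ring r) \<and>
     (\<forall>c::'a. s (cls r (fps_const (fps_const c))) = cls r (fps_const (fps_const c)))"

definition nontriv_involution :: "nat \<Rightarrow> ('a::field fps fps set \<Rightarrow> 'a fps fps set) \<Rightarrow> bool" where
  "nontriv_involution r s \<longleftrightarrow> kalg_aut r s \<and>
     (\<forall>a \<in> carrier (A_ring r). s (s a) = a) \<and>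
     (\<exists>a \<in> carrier (A_ring r). s a \<noteq> a)"

end

theory Submission
  imports Defs
begin

unbundle fps_syntax


lemma PS_simps[simp]: "carrier PS = UNIV" "monoid.mult PS a b = a * b" "monoid.one PS = 1" "ring.zero PS = 0" "ring.add PS a b = a + b"
  by (simp_all add: PS_def)

lemma PS_cring: "cring (PS :: 'a::field fps fps ring)"
proof (rule cringI)
  show "abelian_group (PS::'a fps fps ring)"
    by (rule abelian_groupI) (auto simp: PS_def intro: left_minus)
  show "Group.comm_monoid (PS::'a fps fps ring)"
    by (simp add: PS_def Group.monoid.intro monoid.monoid_comm_monoidI mult.assoc mult.commute)
qed (auto simp: PS_def distrib_right)

definition rel :: "nat \<Rightarrow> 'a::field fps fps" where "rel r = Yv^2 - Xv^(r+1)"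

lemma Irel_eq: "Irel r = {H::'a::field fps fps. rel r dvd H}"
proof -
  have "Irel r = cgenideal PS (rel r :: 'a fps fps)"
    unfolding Irel_def rel_def by (rule cring.cgenideal_eq_genideal[OF PS_cring, symmetric]) simp
  also have "\<dots> = {H. rel r dvd H}"
    by (auto simp: cgenideal_def dvd_def mult.commute)
  finally show ?thesis .
qed

lemma Irel_ideal: "ideal (Irel r) (PS :: 'a::field fps fps ring)"
  unfolding Irel_def by (rule ring.genideal_ideal) (auto intro: cring.axioms(1)[OF PS_cring])

lemma cls_eq: "cls r F = {H + F | H. rel r dvd H}"
  by (auto simp: cls_def a_r_coset_def r_coset_def Irel_eq PS_def)

lemma cls_eq_iff: fixes F G :: "'a::field fps fps" shows "cls r F = cls r G \<longleftrightarrow> rel r dvd (F - G)"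
proof
  assume "cls r F = cls r G"
  moreover have "F \<in> cls r F" unfolding cls_eq by (rule CollectI, rule exI[of _ 0]) simp
  ultimately have "F \<in> cls r G" by simp
  then show "rel r dvd (F - G)" unfolding cls_eq by auto
next
  assume d: "rel r dvd (F - G)"
  show "cls r F = cls r G"
  proof (unfold cls_eq, safe)
    fix H :: "'a fps fps" assume "rel r dvd H"
    then show "\<exists>H'. H + F = H' + G \<and> rel r dvd H'"
      using d by (intro exI[of _ "H + (F - G)"]) auto
  next
    fix H :: "'a fps fps" assume "rel r dvd H"
    then show "\<exists>H'. H + G = H' + F \<and> rel r dvd H'"
      using d by (intro exI[of _ "H - (F - G)"]) auto
  qed
qed

lemma A_carrier: "carrier (A_ring r) = range (cls r :: 'a::field fps fps \<Rightarrow> _)"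
  by (auto simp: A_ring_def FactRing_def A_RCOSETS_defs cls_def a_r_coset_def)

lemma A_mult: "monoid.mult (A_ring r) (cls r F) (cls r G) = cls r (F * G)"
  using ideal.rcoset_mult_add[OF Irel_ideal, of F G]
  by (simp add: A_ring_def FactRing_def cls_def)

lemma A_add: fixes F G :: "'a::field fps fps" shows "ring.add (A_ring r) (cls r F) (cls r G) = cls r (F + G)"
proof -
  have "ring.add (A_ring r) (cls r F) (cls r G) = (\<Union>a\<in>cls r F. \<Union>b\<in>cls r G. {a + b})"
    by (simp add: A_ring_def FactRing_def set_add_def set_mult_def)
  also have "\<dots> = cls r (F + G)"
  proof (unfold cls_eq, safe)
    fix H1 H2 :: "'a fps fps" assume "rel r dvd H1" "rel r dvd H2"
    then show "\<exists>H. H1 + F + (H2 + G) = H + (F + G) \<and> rel r dvd H"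
      by (intro exI[of _ "H1 + H2"]) (auto simp: algebra_simps)
  next
    fix H :: "'a fps fps" assume "rel r dvd H"
    then show "H + (F + G) \<in> (\<Union>a\<in>{H + F |H. rel r dvd H}. \<Union>b\<in>{H + G |H. rel r dvd H}. {a + b})"
      by (auto intro!: bexI[of _ "H + F"] bexI[of _ "0 + G"] simp: algebra_simps)
  qed
  finally show ?thesis .
qed

lemma A_one: "monoid.one (A_ring r) = cls r 1"
  by (simp add: A_ring_def FactRing_def cls_def)



definition fcong :: "nat \<Rightarrow> 'a::comm_ring_1 fps \<Rightarrow> 'a fps \<Rightarrow> bool" where
  "fcong N f g \<longleftrightarrow> (\<forall>n<N. f $ n = g $ n)"

lemma fcong_refl[simp]: "fcong N f f" by (simp add: fcong_def)
lemma fcong_sym: "fcong N f g \<Longrightarrow> fcong N g f" by (simp add: fcong_def)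
lemma fcong_trans: "fcong N f g \<Longrightarrow> fcong N g h \<Longrightarrow> fcong N f h" by (simp add: fcong_def)
lemma fcong_mono: "fcong N f g \<Longrightarrow> M \<le> N \<Longrightarrow> fcong M f g" by (simp add: fcong_def)
lemma fcong_0[simp]: "fcong 0 f g" by (simp add: fcong_def)
lemma fcong_eqI: "(\<And>N. fcong N f g) \<Longrightarrow> f = g"
  by (auto simp: fcong_def fps_eq_iff)
lemma fcong_add: "fcong N a b \<Longrightarrow> fcong N c d \<Longrightarrow> fcong N (a + c) (b + d)"
  by (simp add: fcong_def)
lemma fcong_diff: "fcong N a b \<Longrightarrow> fcong N c d \<Longrightarrow> fcong N (a - c) (b - d)"
  by (simp add: fcong_def)
lemma fcong_uminus: "fcong N a b \<Longrightarrow> fcong N (- a) (- b)"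
  by (simp add: fcong_def)
lemma fcong_iff_diff: "fcong N a b \<longleftrightarrow> fcong N (a - b) 0"
  by (simp add: fcong_def)
lemma fcong_mult: "fcong N a b \<Longrightarrow> fcong N c d \<Longrightarrow> fcong N (a * c) (b * d)"
  unfolding fcong_def fps_mult_nth by (auto intro!: sum.cong)
lemma fcong_power: "fcong N a b \<Longrightarrow> fcong N (a ^ k) (b ^ k)"
  by (induction k) (auto intro: fcong_mult)
lemma fcong_sum: "(\<And>i. i \<in> I \<Longrightarrow> fcong N (f i) (g i)) \<Longrightarrow> fcong N (sum f I) (sum g I)"
  by (induction I rule: infinite_finite_induct) (auto intro: fcong_add)
lemma fcong_mult_zero: "fcong a x 0 \<Longrightarrow> fcong b y 0 \<Longrightarrow> fcong (a + b) (x * y) 0"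
  unfolding fcong_def fps_mult_nth
proof (intro allI impI)
  fix n assume x: "\<forall>n<a. x $ n = 0 $ n" and y: "\<forall>n<b. y $ n = 0 $ n" and n: "n < a + b"
  show "(\<Sum>i = 0..n. x $ i * y $ (n - i)) = 0 $ n"
  proof (rule trans[OF sum.neutral], intro ballI)
    fix i assume i: "i \<in> {0..n}"
    show "x $ i * y $ (n - i) = 0"
    proof (cases "i < a")
      case True then show ?thesis using x by simp
    next
      case False then have "n - i < b" using n i by auto
      then show ?thesis using y by simp
    qed
  qed simp
qed
lemma fcong_mult_zero_left: "fcong a x 0 \<Longrightarrow> fcong a (x * y) 0"
  using fcong_mult_zero[of a x 0 y] by simp
lemma fcong_mult_zero_right: "fcong a x 0 \<Longrightarrow> fcong a (y * x) 0"
  using fcong_mult_zero_left[of a x y] by (simp add: mult.commute)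
lemma fcong_power_zero: "fcong 1 x 0 \<Longrightarrow> fcong k (x ^ k) 0"
proof (induction k)
  case (Suc k) then show ?case using fcong_mult_zero[of 1 x k "x^k"] by simp
qed simp
lemma fcong_power_zero_ge: "fcong 1 x 0 \<Longrightarrow> k \<le> j \<Longrightarrow> fcong k (x ^ j) 0"
  using fcong_power_zero fcong_mono by blast
lemma fcong_1_iff: "fcong 1 x 0 \<longleftrightarrow> x $ 0 = 0" by (simp add: fcong_def)
lemma fcong_Suc0_iff[simp]: "fcong (Suc 0) x 0 \<longleftrightarrow> x $ 0 = 0" by (simp add: fcong_def)

lemma fcong_compose_left: "fcong N a b \<Longrightarrow> fcong N (a oo c) (b oo c)"
  unfolding fcong_def fps_compose_nth by auto
lemma fcong_compose_right: "fcong N c d \<Longrightarrow> fcong N (a oo c) (a oo d)"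
proof -
  assume "fcong N c d"
  then have "fcong N (c^i) (d^i)" for i by (rule fcong_power)
  then show ?thesis unfolding fcong_def fps_compose_nth by (auto intro!: sum.cong)
qed

subsection \<open>Evaluation of a power series in y with coefficients in k[[x]]\<close>

definition ev1 :: "'a::field fps fps \<Rightarrow> 'a fps \<Rightarrow> 'a fps" where
  "ev1 H q = Abs_fps (\<lambda>n. (\<Sum>j\<le>n. H $ j * q^j) $ n)"

lemma ev1_trunc:
  assumes q0: "q $ 0 = 0" and "N \<le> Suc n"
  shows "fcong N (ev1 H q) (\<Sum>j\<le>n. H $ j * q^j)"
  unfolding fcong_def
proof (intro allI impI)
  fix m assume "m < N"
  then have mn: "m \<le> n" using assms by simp
  have "(\<Sum>j\<le>n. H $ j * q^j) $ m = (\<Sum>j\<le>m. H $ j * q^j) $ m + (\<Sum>j\<in>{m<..n}. H $ j * q^j) $ m"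
  proof -
    have "{..n} = {..m} \<union> {m<..n}" using mn by auto
    moreover have "(\<Sum>j\<in>{..m} \<union> {m<..n}. H $ j * q^j) = (\<Sum>j\<le>m. H $ j * q^j) + (\<Sum>j\<in>{m<..n}. H $ j * q^j)"
      by (rule sum.union_disjoint) auto
    ultimately have "(\<Sum>j\<le>n. H $ j * q^j) = (\<Sum>j\<le>m. H $ j * q^j) + (\<Sum>j\<in>{m<..n}. H $ j * q^j)"
      by simp
    then show ?thesis by simp
  qed
  also have "(\<Sum>j\<in>{m<..n}. H $ j * q^j) $ m = 0"
  proof -
    have "fcong (Suc m) (\<Sum>j\<in>{m<..n}. H $ j * q^j) (\<Sum>j\<in>{m<..n}. 0)"
      by (rule fcong_sum, rule fcong_mult_zero_right, rule fcong_power_zero_ge) (use q0 in \<open>auto simp: fcong_1_iff\<close>)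
    then show ?thesis by (simp add: fcong_def)
  qed
  finally show "ev1 H q $ m = (\<Sum>j\<le>n. H $ j * q ^ j) $ m" by (simp add: ev1_def)
qed

lemma ev1_eqI:
  assumes q0: "q $ 0 = 0" and "\<And>n. fcong (Suc n) G (\<Sum>j\<le>n. H $ j * q^j)"
  shows "ev1 H q = G"
proof (rule fcong_eqI)
  fix N
  show "fcong N (ev1 H q) G"
    using ev1_trunc[OF q0, of "Suc N" N H] assms(2)[of N]
    by (meson fcong_mono fcong_sym fcong_trans le_SucI order_refl)
qed

lemma ev1_add: "ev1 (H + K) q = ev1 H q + ev1 K q"
  by (simp add: ev1_def fps_eq_iff distrib_right sum.distrib)

lemma ev1_mult:
  assumes q0: "q $ 0 = 0"
  shows "ev1 (H * K) q = ev1 H q * ev1 K q"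
proof (rule ev1_eqI[OF q0])
  fix n
  let ?f = "\<lambda>i k. H $ i * K $ k * q^(i+k)"
  have "fcong (Suc n) (ev1 H q * ev1 K q) ((\<Sum>i\<le>n. H $ i * q^i) * (\<Sum>k\<le>n. K $ k * q^k))"
    by (intro fcong_mult ev1_trunc q0) auto
  also have "(\<Sum>i\<le>n. H $ i * q^i) * (\<Sum>k\<le>n. K $ k * q^k) = (\<Sum>(i,k)\<in>{..n}\<times>{..n}. ?f i k)"
    by (simp add: sum_product sum.cartesian_product power_add algebra_simps)
  also have "\<dots> = (\<Sum>(i,k)\<in>{(i,k). i + k \<le> n}. ?f i k) + (\<Sum>(i,k)\<in>{..n}\<times>{..n} - {(i,k). i + k \<le> n}. ?f i k)"
  proof -
    have sub: "{(i,k). i + k \<le> n} \<subseteq> {..n}\<times>{..n}" by auto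
    have fin: "finite ({..n}\<times>{..n})" by simp
    show ?thesis using sum.subset_diff[OF sub fin] by (simp add: add.commute)
  qed
  finally have 1: "fcong (Suc n) (ev1 H q * ev1 K q) ((\<Sum>(i,k)\<in>{(i,k). i + k \<le> n}. ?f i k) + (\<Sum>(i,k)\<in>{..n}\<times>{..n} - {(i,k). i + k \<le> n}. ?f i k))" .
  have 2: "fcong (Suc n) (\<Sum>(i,k)\<in>{..n}\<times>{..n} - {(i,k). i + k \<le> n}. ?f i k) (\<Sum>(i,k)\<in>{..n}\<times>{..n} - {(i,k). i + k \<le> n}. 0)"
    by (rule fcong_sum) (auto intro!: fcong_mult_zero_right fcong_power_zero_ge simp: q0)
  have 3: "(\<Sum>(i,k)\<in>{(i,k). i + k \<le> n}. ?f i k) = (\<Sum>j\<le>n. (H*K) $ j * q^j)"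
    by (simp add: sum.triangle_reindex_eq fps_mult_nth sum_distrib_right atLeast0AtMost)
  show "fcong (Suc n) (ev1 H q * ev1 K q) (\<Sum>j\<le>n. (H * K) $ j * q ^ j)"
    using fcong_trans[OF 1 fcong_add[OF fcong_refl 2]] 3 by simp
qed

lemma ev1_const: "q $ 0 = 0 \<Longrightarrow> ev1 (fps_const c) q = c"
  by (rule ev1_eqI) (auto simp: atMost_atLeast0 sum.atLeast_Suc_atMost fps_nth_fps_const)

lemma ev1_X: "q $ 0 = 0 \<Longrightarrow> ev1 fps_X q = q"
proof (rule ev1_eqI)
  fix n assume "q $ 0 = 0"
  have "(\<Sum>j\<le>n. (fps_X::'a fps fps) $ j * q ^ j) = (\<Sum>j\<in>{1}\<inter>{..n}. q)"
    by (rule sum.mono_neutral_cong_right) auto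
  then show "fcong (Suc n) q (\<Sum>j\<le>n. (fps_X::'a fps fps) $ j * q ^ j)"
    by (cases n) (auto simp: fcong_def \<open>q $ 0 = 0\<close>)
qed

lemma ev1_compose:
  assumes q0: "q $ 0 = 0" and f0: "f $ 0 = 0"
  shows "ev1 H q oo f = ev1 (Abs_fps (\<lambda>j. H $ j oo f)) (q oo f)"
proof (rule sym, rule ev1_eqI)
  show "(q oo f) $ 0 = 0" using q0 by simp
  fix n
  have "fcong (Suc n) (ev1 H q oo f) ((\<Sum>j\<le>n. H $ j * q^j) oo f)"
    by (intro fcong_compose_left ev1_trunc q0) auto
  also have "(\<Sum>j\<le>n. H $ j * q^j) oo f = (\<Sum>j\<le>n. (H $ j oo f) * (q oo f)^j)"
    by (simp add: fps_compose_sum_distrib fps_compose_mult_distrib[OF f0] fps_compose_power[OF f0])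
  finally show "fcong (Suc n) (ev1 H q oo f) (\<Sum>j\<le>n. Abs_fps (\<lambda>j. H $ j oo f) $ j * (q oo f) ^ j)"
    by simp
qed



definition cmap :: "'a::field fps fps \<Rightarrow> 'a fps \<Rightarrow> 'a fps fps" where
  "cmap F p = Abs_fps (\<lambda>j. F $ j oo p)"

definition ev2 :: "'a::field fps fps \<Rightarrow> 'a fps \<Rightarrow> 'a fps \<Rightarrow> 'a fps" where
  "ev2 F p q = ev1 (cmap F p) q"

lemma cmap_add: "cmap (F + G) p = cmap F p + cmap G p"
  by (simp add: cmap_def fps_eq_iff fps_compose_add_distrib)

lemma cmap_mult: "p $ 0 = 0 \<Longrightarrow> cmap (F * G) p = cmap F p * cmap G p"
  by (simp add: cmap_def fps_eq_iff fps_mult_nth fps_compose_sum_distrib fps_compose_mult_distrib)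

lemma cmap_const: "cmap (fps_const a) p = fps_const (a oo p)"
  by (simp add: cmap_def fps_eq_iff)

lemma cmap_Yv: "cmap Yv p = fps_X"
  by (simp add: cmap_def fps_eq_iff Yv_def fps_X_def)

lemma cmap_Xv: "p $ 0 = 0 \<Longrightarrow> cmap Xv p = fps_const p"
  by (simp add: Xv_def cmap_const)

lemma ev2_add: "ev2 (F + G) p q = ev2 F p q + ev2 G p q"
  by (simp add: ev2_def cmap_add ev1_add)

lemma ev2_mult: "p $ 0 = 0 \<Longrightarrow> q $ 0 = 0 \<Longrightarrow> ev2 (F * G) p q = ev2 F p q * ev2 G p q"
  by (simp add: ev2_def cmap_mult ev1_mult)

lemma ev2_const: "q $ 0 = 0 \<Longrightarrow> ev2 (fps_const a) p q = a oo p"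
  by (simp add: ev2_def cmap_const ev1_const)

lemma ev2_constc: "q $ 0 = 0 \<Longrightarrow> ev2 (fps_const (fps_const c)) p q = fps_const c"
  by (simp add: ev2_const)

lemma ev2_one: "q $ 0 = 0 \<Longrightarrow> ev2 1 p q = 1"
  using ev2_constc[of q 1 p] by simp

lemma ev2_Xv: "p $ 0 = 0 \<Longrightarrow> q $ 0 = 0 \<Longrightarrow> ev2 Xv p q = p"
  by (simp add: ev2_def cmap_Xv ev1_const)

lemma ev2_Yv: "q $ 0 = 0 \<Longrightarrow> ev2 Yv p q = q"
  by (simp add: ev2_def cmap_Yv ev1_X)

lemma ev2_compose:
  assumes p0: "p $ 0 = 0" and q0: "q $ 0 = 0" and f0: "f $ 0 = 0"
  shows "ev2 F p q oo f = ev2 F (p oo f) (q oo f)"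
proof -
  have "Abs_fps (\<lambda>j. cmap F p $ j oo f) = cmap F (p oo f)"
    by (simp add: cmap_def fps_eq_iff fps_compose_assoc[OF f0 p0])
  then show ?thesis
    by (simp add: ev2_def ev1_compose[OF q0 f0])
qed

lemma ev2_trunc:
  assumes "q $ 0 = 0" "N \<le> Suc n"
  shows "fcong N (ev2 F p q) (\<Sum>j\<le>n. (F $ j oo p) * q^j)"
  using ev1_trunc[OF assms, of "cmap F p"] by (simp add: ev2_def cmap_def)

lemma ev2_cong:
  assumes "q $ 0 = 0" "q' $ 0 = 0" "fcong N p p'" "fcong N q q'"
  shows "fcong N (ev2 F p q) (ev2 F p' q')"
proof -
  have "fcong N (ev2 F p q) (\<Sum>j\<le>N. (F $ j oo p) * q^j)" by (rule ev2_trunc) (use assms in auto)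
  moreover have "fcong N (\<Sum>j\<le>N. (F $ j oo p) * q^j) (\<Sum>j\<le>N. (F $ j oo p') * q'^j)"
    by (intro fcong_sum fcong_mult fcong_compose_right fcong_power assms)
  moreover have "fcong N (ev2 F p' q') (\<Sum>j\<le>N. (F $ j oo p') * q'^j)" by (rule ev2_trunc) (use assms in auto)
  ultimately show ?thesis by (meson fcong_sym fcong_trans)
qed

definition is_hom2 :: "('a::field fps fps \<Rightarrow> 'a fps) \<Rightarrow> bool" where
  "is_hom2 b \<longleftrightarrow> (\<forall>F G. b (F + G) = b F + b G) \<and> (\<forall>F G. b (F * G) = b F * b G) \<and>
     (\<forall>c. b (fps_const (fps_const c)) = fps_const c)"

lemma is_hom2_ev2: "p $ 0 = 0 \<Longrightarrow> q $ 0 = 0 \<Longrightarrow> is_hom2 (\<lambda>F. ev2 F p q)"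
  by (simp add: is_hom2_def ev2_add ev2_mult ev2_constc)

lemma is_hom2_one: "is_hom2 b \<Longrightarrow> b 1 = 1"
  unfolding is_hom2_def by (metis fps_const_1_eq_1)
lemma is_hom2_zero: "is_hom2 b \<Longrightarrow> b 0 = 0"
  unfolding is_hom2_def by (metis fps_const_0_eq_0)
lemma is_hom2_power: "is_hom2 b \<Longrightarrow> b (F ^ n) = b F ^ n"
  by (induction n) (auto simp: is_hom2_one, simp add: is_hom2_def)
lemma is_hom2_sum: "is_hom2 b \<Longrightarrow> b (sum f I) = (\<Sum>i\<in>I. b (f i))"
  by (induction I rule: infinite_finite_induct) (auto simp: is_hom2_zero, simp add: is_hom2_def)

lemma hom2_unique:
  assumes b1: "is_hom2 b1" and b2: "is_hom2 b2"
    and X: "b1 Xv = b2 Xv" and Y: "b1 Yv = b2 Yv"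
    and X0: "b1 Xv $ 0 = 0" and Y0: "b1 Yv $ 0 = 0"
  shows "b1 F = b2 F"
proof (rule fcong_eqI)
  fix N
  define P where "P = (\<Sum>j<N. fps_const (\<Sum>i<N. fps_const (F $ j $ i) * fps_X ^ i) * Yv ^ j)"
  define G where "G = F - P"
  have Pnth: "P $ j $ i = (if i < N \<and> j < N then F $ j $ i else 0)" for i j
  proof -
    have "P $ j = (if j < N then (\<Sum>i<N. fps_const (F $ j $ i) * fps_X ^ i) else 0)"
      unfolding P_def Yv_def
      by (simp add: fps_sum_nth fps_X_power_nth mult_delta_right)
    then show ?thesis
      by (simp add: fps_sum_nth fps_X_power_nth mult_delta_right)
  qed
  have cs: "fps_const (sum f I) = (\<Sum>i\<in>I. fps_const (f i))" for f :: "nat \<Rightarrow> 'a fps" and I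
    by (induction I rule: infinite_finite_induct) (auto simp flip: fps_const_add)
  have hc: "b (fps_const (fps_const c * fps_X ^ i)) = fps_const c * b Xv ^ i"
    if "is_hom2 b" for b c i
  proof -
    have "fps_const (fps_const c * fps_X ^ i) = fps_const (fps_const c) * Xv ^ i"
      by (simp add: Xv_def)
    then show ?thesis using that is_hom2_power[OF that] by (simp add: is_hom2_def)
  qed
  have e: "b P = (\<Sum>j<N. \<Sum>i<N. fps_const (F $ j $ i) * b Xv ^ i * b Yv ^ j)" if bh: "is_hom2 b" for b
  proof -
    have "b P = (\<Sum>j<N. \<Sum>i<N. b (fps_const (fps_const (F $ j $ i) * fps_X ^ i)) * b (Yv ^ j))"
      unfolding P_def cs sum_distrib_right using bh
      by (simp add: is_hom2_sum[OF bh], simp add: is_hom2_def)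
    then show ?thesis by (simp add: hc[OF bh] is_hom2_power[OF bh])
  qed
  have bP: "b1 P = b2 P" by (simp add: e[OF b1] e[OF b2] X Y)
  have G0: "G $ j $ i = 0" if "i < N" "j < N" for i j
    using that by (simp add: G_def Pnth)
  define H1 where "H1 = fps_shift N G"
  define H2 where "H2 = Abs_fps (\<lambda>j. if j < N then fps_shift N (G $ j) else 0)"
  have GH: "G = Yv ^ N * H1 + Xv ^ N * H2"
  proof (subst fps_eq_iff, intro allI)
    fix j
    show "G $ j = (Yv ^ N * H1 + Xv ^ N * H2) $ j"
    proof (cases "j < N")
      case True
      have "G $ j = fps_X ^ N * fps_shift N (G $ j)"
        using G0[OF _ True] by (simp add: fps_eq_iff fps_X_power_mult_nth)
      then show ?thesis using True
        by (simp add: Yv_def Xv_def H1_def H2_def fps_X_power_mult_nth)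
    next
      case False
      then show ?thesis
        by (simp add: Yv_def Xv_def H1_def H2_def fps_X_power_mult_nth)
    qed
  qed
  have FG: "F = P + (Yv ^ N * H1 + Xv ^ N * H2)" using GH by (simp add: G_def algebra_simps)
  have bF: "b F = b P + (b Yv ^ N * b H1 + b Xv ^ N * b H2)" if bh: "is_hom2 b" for b
    using bh unfolding FG by (simp add: is_hom2_def is_hom2_power[OF bh, symmetric])
  have z: "fcong N (b Yv ^ N * b H1 + b Xv ^ N * b H2) 0" if "b Yv $ 0 = 0" "b Xv $ 0 = 0" for b :: "'a fps fps \<Rightarrow> 'a fps"
    using fcong_add[OF fcong_mult_zero_left[OF fcong_power_zero] fcong_mult_zero_left[OF fcong_power_zero]] that
    by (simp add: fcong_1_iff)
  have "fcong N (b1 F) (b1 P + 0)" unfolding bF[OF b1]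
    by (rule fcong_add[OF fcong_refl z]) (use X0 Y0 in auto)
  moreover have "fcong N (b2 F) (b2 P + 0)" unfolding bF[OF b2]
    by (rule fcong_add[OF fcong_refl z]) (use X0 Y0 X Y in auto)
  ultimately show "fcong N (b1 F) (b2 F)" using bP by (metis fcong_sym fcong_trans add_0_right)
qed



locale model =
  fixes r :: nat and Phi :: "'a::field fps fps \<Rightarrow> 'b::comm_ring_1"
  assumes Phi_add: "Phi (F + G) = Phi F + Phi G"
    and Phi_mult: "Phi (F * G) = Phi F * Phi G"
    and Phi_one: "Phi 1 = 1"
    and Phi_ker: "Phi F = 0 \<longleftrightarrow> rel r dvd F"
begin

lemma Phi_zero: "Phi 0 = 0"
  using Phi_add[of 0 0] by simp

lemma Phi_diff: "Phi (F - G) = Phi F - Phi G"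
  using Phi_add[of "F - G" G] by (simp add: algebra_simps)

lemma Phi_power: "Phi (F ^ n) = Phi F ^ n"
  by (induction n) (simp_all add: Phi_one Phi_mult)

lemma cls_iff: "cls r F = cls r G \<longleftrightarrow> Phi F = Phi G"
  using cls_eq_iff[of r F G] Phi_ker[of "F - G"] by (simp add: Phi_diff)

definition iota :: "'a fps fps set \<Rightarrow> 'b" where
  "iota C = Phi (SOME F. C = cls r F)"

lemma iota_cls[simp]: "iota (cls r F) = Phi F"
proof -
  have "cls r F = cls r (SOME G. cls r F = cls r G)" by (rule someI) simp
  then show ?thesis unfolding iota_def cls_iff by simp
qed

definition pre :: "'b \<Rightarrow> 'a fps fps" where
  "pre f = (SOME F. Phi F = f)"

lemma Phi_pre[simp]: "f \<in> range Phi \<Longrightarrow> Phi (pre f) = f"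
  unfolding pre_def by (rule someI_ex) auto

lemma cls_pre_Phi[simp]: "cls r (pre (Phi F)) = cls r F"
  by (simp add: cls_iff)

definition sig :: "('a fps fps set \<Rightarrow> 'a fps fps set) \<Rightarrow> 'b \<Rightarrow> 'b" where
  "sig s f = iota (s (cls r (pre f)))"

lemma aut_cls:
  assumes "kalg_aut r s"
  shows "\<exists>G. s (cls r F) = cls r G"
proof -
  have "cls r F \<in> carrier (A_ring r)" by (simp add: A_carrier)
  then have "s (cls r F) \<in> carrier (A_ring r)"
    using assms unfolding kalg_aut_def by (auto dest: ring_iso_memE(1))
  then show ?thesis by (auto simp: A_carrier)
qed

lemma sig_Phi: "sig s (Phi F) = iota (s (cls r F))"
  by (simp add: sig_def)

lemma sig_in: "kalg_aut r s \<Longrightarrow> sig s (Phi F) \<in> range Phi"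
  using aut_cls[of s F] by (metis iota_cls rangeI sig_Phi)

lemma sig_add:
  assumes "kalg_aut r s"
  shows "sig s (Phi F + Phi G) = sig s (Phi F) + sig s (Phi G)"
proof -
  obtain F' G' where F': "s (cls r F) = cls r F'" and G': "s (cls r G) = cls r G'"
    using aut_cls[OF assms] by metis
  have "s (cls r (F + G)) = s (ring.add (A_ring r) (cls r F) (cls r G))" by (simp add: A_add)
  also have "\<dots> = ring.add (A_ring r) (s (cls r F)) (s (cls r G))"
    using assms unfolding kalg_aut_def by (intro ring_iso_memE(3)) (auto simp: A_carrier)
  also have "\<dots> = cls r (F' + G')" by (simp add: F' G' A_add)
  finally have "sig s (Phi (F + G)) = Phi (F' + G')" by (simp add: sig_Phi)
  then show ?thesis by (simp only: Phi_add sig_Phi F' G' iota_cls)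
qed

lemma sig_mult:
  assumes "kalg_aut r s"
  shows "sig s (Phi F * Phi G) = sig s (Phi F) * sig s (Phi G)"
proof -
  obtain F' G' where F': "s (cls r F) = cls r F'" and G': "s (cls r G) = cls r G'"
    using aut_cls[OF assms] by metis
  have "s (cls r (F * G)) = s (monoid.mult (A_ring r) (cls r F) (cls r G))" by (simp add: A_mult)
  also have "\<dots> = monoid.mult (A_ring r) (s (cls r F)) (s (cls r G))"
    using assms unfolding kalg_aut_def by (intro ring_iso_memE(2)) (auto simp: A_carrier)
  also have "\<dots> = cls r (F' * G')" by (simp add: F' G' A_mult)
  finally have "sig s (Phi (F * G)) = Phi (F' * G')" by (simp add: sig_Phi)
  then show ?thesis by (simp only: Phi_mult sig_Phi F' G' iota_cls)
qed

lemma sig_const: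
  assumes "kalg_aut r s"
  shows "sig s (Phi (fps_const (fps_const c))) = Phi (fps_const (fps_const c))"
  using assms by (simp add: sig_Phi kalg_aut_def)

lemma sig_one:
  assumes "kalg_aut r s"
  shows "sig s 1 = 1"
  using sig_const[OF assms, of 1] by (simp add: Phi_one)

lemma sig_invol:
  assumes "nontriv_involution r s"
  shows "sig s (sig s (Phi F)) = Phi F"
proof -
  have k: "kalg_aut r s" using assms by (simp add: nontriv_involution_def)
  obtain F' where F': "s (cls r F) = cls r F'" using aut_cls[OF k] by metis
  have "s (s (cls r F)) = cls r F"
    using assms by (auto simp: nontriv_involution_def A_carrier)
  then show ?thesis by (simp add: sig_Phi F')
qed

lemma sig_nontriv:
  assumes "nontriv_involution r s"
  shows "\<exists>F. sig s (Phi F) \<noteq> Phi F"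
proof -
  have k: "kalg_aut r s" using assms by (simp add: nontriv_involution_def)
  obtain F where F: "s (cls r F) \<noteq> cls r F"
    using assms by (auto simp: nontriv_involution_def A_carrier)
  obtain F' where F': "s (cls r F) = cls r F'" using aut_cls[OF k] by metis
  show ?thesis using F F' by (intro exI[of _ F]) (simp add: sig_Phi cls_iff)
qed

lemma conj_aut:
  fixes t ti :: "'b \<Rightarrow> 'b" and s
  defines "T \<equiv> (\<lambda>C. cls r (pre (t (iota C))))"
  assumes t_in: "\<And>F. t (Phi F) \<in> range Phi" and ti_in: "\<And>F. ti (Phi F) \<in> range Phi"
    and t_ti: "\<And>F. t (ti (Phi F)) = Phi F" and ti_t: "\<And>F. ti (t (Phi F)) = Phi F"
    and t_add: "\<And>F G. t (Phi F + Phi G) = t (Phi F) + t (Phi G)"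
    and t_mult: "\<And>F G. t (Phi F * Phi G) = t (Phi F) * t (Phi G)"
    and t_const: "\<And>c. t (Phi (fps_const (fps_const c))) = Phi (fps_const (fps_const c))"
    and s: "kalg_aut r s"
  shows "kalg_aut r T"
    and "\<And>F G. t (sig s (ti (Phi F))) = Phi G \<Longrightarrow>
           T (s (inv_into (carrier (A_ring r)) T (cls r F))) = cls r G"
proof -
  have T_cls: "T (cls r F) = cls r (pre (t (Phi F)))" for F by (simp add: T_def)
  have "\<forall>F. \<exists>G. t (Phi F) = Phi G" using t_in by blast
  then obtain tf where tf: "\<And>F. t (Phi F) = Phi (tf F)" by metis
  have "\<forall>F. \<exists>G. ti (Phi F) = Phi G" using ti_in by blast
  then obtain tif where tif: "\<And>F. ti (Phi F) = Phi (tif F)" by metis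
  have T_cls': "T (cls r F) = cls r (tf F)" for F by (simp add: T_cls tf)
  have one: "t 1 = 1" using t_const[of 1] by (simp add: Phi_one)
  have inj: "inj_on T (carrier (A_ring r))"
  proof (rule inj_onI)
    fix C D :: "'a fps fps set" assume "C \<in> carrier (A_ring r)" "D \<in> carrier (A_ring r)" "T C = T D"
    then obtain F G where C: "C = cls r F" and D: "D = cls r G" and e: "T (cls r F) = T (cls r G)"
      by (auto simp: A_carrier)
    from e have "Phi (tf F) = Phi (tf G)" by (simp add: T_cls' cls_iff)
    then have "ti (t (Phi F)) = ti (t (Phi G))" by (simp add: tf)
    then show "C = D" by (simp add: ti_t C D cls_iff)
  qed
  have surj: "T (cls r (tif F)) = cls r F" for F
  proof -
    have "t (Phi (tif F)) = Phi F" using t_ti[of F] by (simp add: tif)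
    then show ?thesis by (simp add: T_cls cls_iff)
  qed
  have bij: "bij_betw T (carrier (A_ring r)) (carrier (A_ring r))"
  proof (rule bij_betw_imageI[OF inj])
    show "T ` carrier (A_ring r) = carrier (A_ring r)"
    proof
      show "T ` carrier (A_ring r) \<subseteq> carrier (A_ring r)" by (auto simp: A_carrier T_cls')
      show "carrier (A_ring r) \<subseteq> T ` carrier (A_ring r)"
        by (auto simp: A_carrier) (metis rangeI image_eqI surj)
    qed
  qed
  have iso: "T \<in> ring_iso (A_ring r) (A_ring r)"
  proof (rule ring_iso_memI)
    fix x :: "'a fps fps set" assume "x \<in> carrier (A_ring r)" then show "T x \<in> carrier (A_ring r)"
      by (auto simp: A_carrier T_cls')
  next
    fix x y :: "'a fps fps set" assume "x \<in> carrier (A_ring r)" "y \<in> carrier (A_ring r)"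
    then obtain F G where x: "x = cls r F" and y: "y = cls r G" by (auto simp: A_carrier)
    have "t (Phi (F * G)) = Phi (tf F * tf G)" by (simp add: Phi_mult t_mult tf)
    then show "T (monoid.mult (A_ring r) x y) = monoid.mult (A_ring r) (T x) (T y)"
      by (simp add: x y A_mult T_cls' cls_iff tf)
    have "t (Phi (F + G)) = Phi (tf F + tf G)" by (simp add: Phi_add t_add tf)
    then show "T (ring.add (A_ring r) x y) = ring.add (A_ring r) (T x) (T y)"
      by (simp add: x y A_add T_cls' cls_iff tf)
  next
    show "T (monoid.one (A_ring r)) = monoid.one (A_ring r :: 'a fps fps set ring)"
      by (simp add: A_one T_cls Phi_one one) (metis Phi_one Phi_pre rangeI cls_iff)
  qed (rule bij)
  show "kalg_aut r T"
    unfolding kalg_aut_def using iso by (simp add: T_cls t_const)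
  fix F G assume h: "t (sig s (ti (Phi F))) = Phi G"
  have "inv_into (carrier (A_ring r)) T (cls r F) = cls r (tif F)"
    by (rule inv_into_f_eq[OF inj]) (auto simp: A_carrier surj)
  moreover obtain F3 where F3: "s (cls r (tif F)) = cls r F3" using aut_cls[OF s] by metis
  moreover have "sig s (ti (Phi F)) = Phi F3" by (simp add: tif sig_Phi F3)
  ultimately show "T (s (inv_into (carrier (A_ring r)) T (cls r F))) = cls r G"
    using h by (simp add: T_cls cls_iff)
qed

end



subsection \<open>Division by y^2 - x^(r+1)\<close>

lemma ev1_step: "q $ 0 = 0 \<Longrightarrow> ev1 H q = H $ 0 + q * ev1 (fps_shift 1 H) q"
proof -
  assume q0: "q $ 0 = 0"
  have "H = fps_const (H $ 0) + fps_X * fps_shift 1 H"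
    by (simp add: fps_eq_iff fps_X_mult_nth)
  then have "ev1 H q = ev1 (fps_const (H $ 0) + fps_X * fps_shift 1 H) q" by simp
  also have "\<dots> = H $ 0 + q * ev1 (fps_shift 1 H) q"
    by (simp add: ev1_add ev1_mult[OF q0] ev1_const[OF q0] ev1_X[OF q0])
  finally show ?thesis .
qed

lemma division:
  fixes F :: "'a::field fps fps"
  shows "\<exists>Q a b. F = Q * rel r + fps_const a + fps_const b * Yv"
proof -
  define Z :: "'a fps" where "Z = fps_X ^ (r + 1)"
  have Z0: "Z $ 0 = 0" by (simp add: Z_def)
  define D where "D k = ev1 (Abs_fps (\<lambda>j. F $ (2 * j + k))) Z" for k
  have DS: "D k = F $ k + Z * D (k + 2)" for k
  proof -
    have "fps_shift 1 (Abs_fps (\<lambda>j. F $ (2 * j + k))) = Abs_fps (\<lambda>j. F $ (2 * j + (k + 2)))"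
      by (simp add: fps_eq_iff algebra_simps)
    then show ?thesis unfolding D_def by (subst ev1_step[OF Z0]) simp
  qed
  define Q where "Q = Abs_fps (\<lambda>n. D (n + 2))"
  have "F = Q * rel r + fps_const (D 0) + fps_const (D 1) * Yv"
  proof (subst fps_eq_iff, intro allI)
    fix n
    have e: "\<not> n < 2 \<Longrightarrow> Suc (Suc (n - 2)) = n" by simp
    have "(Q * rel r) $ n = (if n < 2 then 0 else D n) - Z * D (n + 2)"
      using e by (simp add: rel_def Q_def Yv_def Xv_def Z_def algebra_simps fps_X_power_mult_right_nth fps_X_power_mult_nth)
    then show "F $ n = (Q * rel r + fps_const (D 0) + fps_const (D 1) * Yv) $ n"
      using DS[of n] by (cases "n = 0"; cases "n = 1") (auto simp: Yv_def fps_X_mult_right_nth)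
  qed
  then show ?thesis by blast
qed

lemma compose_X2_nth: "(a oo fps_X ^ 2) $ k = (if even k then a $ (k div 2) else (0::'a::field))"
proof -
  have "(a oo fps_X ^ 2) $ k = (\<Sum>i = 0..k. if k = 2 * i then a $ i else 0)"
    unfolding fps_compose_nth by (rule sum.cong) (auto simp: power_mult[symmetric] fps_X_power_nth)
  also have "\<dots> = (\<Sum>i \<in> {0..k} \<inter> {i. k = 2 * i}. a $ i)"
    by (simp add: sum.inter_restrict)
  also have "\<dots> = (if even k then a $ (k div 2) else 0)"
  proof (cases "even k")
    case True
    then have "{0..k} \<inter> {i. k = 2 * i} = {k div 2}" by auto
    then show ?thesis using True by simp
  next
    case False
    then have "{0..k} \<inter> {i. k = 2 * i} = {}" by auto
    then show ?thesis using False by simp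
  qed
  finally show ?thesis .
qed

definition PhiE :: "nat \<Rightarrow> 'a::field fps fps \<Rightarrow> 'a fps" where
  "PhiE r F = ev2 F (fps_X ^ 2) (fps_X ^ (r + 1))"

lemma PhiE_simps:
  "PhiE r (F + G) = PhiE r F + PhiE r G"
  "PhiE r (F * G) = PhiE r F * PhiE r G"
  "PhiE r 1 = 1"
  "PhiE r Xv = fps_X ^ 2"
  "PhiE r Yv = fps_X ^ (r + 1)"
  "PhiE r (fps_const a) = a oo fps_X ^ 2"
  by (simp_all add: PhiE_def ev2_add ev2_mult ev2_one ev2_Xv ev2_Yv ev2_const)

lemma PhiE_rel: "PhiE r (rel r) = 0"
proof -
  have d: "PhiE r (F - G) = PhiE r F - PhiE r G" for F G
    using PhiE_simps(1)[of r "F - G" G] by (simp add: algebra_simps)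
  have p: "PhiE r (F ^ n) = PhiE r F ^ n" for F n
    by (induction n) (simp_all add: PhiE_simps)
  have "PhiE r (rel r) = (fps_X ^ (r + 1)) ^ 2 - (fps_X ^ 2) ^ (r + 1)"
    by (simp only: rel_def PhiE_simps d p)
  then show ?thesis by (simp only: power_mult[symmetric] mult.commute diff_self)
qed

lemma model_even:
  assumes "even r"
  shows "model r (PhiE r :: 'a::field fps fps \<Rightarrow> 'a fps)"
proof
  fix F :: "'a fps fps"
  show "PhiE r F = 0 \<longleftrightarrow> rel r dvd F"
  proof
    assume "rel r dvd F"
    then obtain Q where "F = rel r * Q" by (auto simp: dvd_def)
    then show "PhiE r F = 0" by (simp add: PhiE_simps PhiE_rel)
  next
    assume F0: "PhiE r F = 0"
    obtain Q a b where F: "F = Q * rel r + fps_const a + fps_const b * Yv" using division by blast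
    have e: "(a oo fps_X ^ 2) + (b oo fps_X ^ 2) * fps_X ^ (r + 1) = 0"
      using F0 unfolding F by (simp del: power_Suc add: PhiE_simps PhiE_rel)
    have a0: "a $ n = 0" for n
    proof -
      have "((a oo fps_X ^ 2) + (b oo fps_X ^ 2) * fps_X ^ (r + 1)) $ (2 * n) = 0" using e by simp
      moreover have "odd (2 * n - (r + 1))" if "\<not> 2 * n < r + 1" using assms that by simp
      ultimately show ?thesis
        by (auto simp del: power_Suc simp: fps_X_power_mult_right_nth compose_X2_nth split: if_splits)
    qed
    have b0: "b $ n = 0" for n
    proof -
      have "((a oo fps_X ^ 2) + (b oo fps_X ^ 2) * fps_X ^ (r + 1)) $ (2 * n + (r + 1)) = 0" using e by simp
      then show ?thesis using assms
        by (auto simp del: power_Suc simp: fps_X_power_mult_right_nth compose_X2_nth split: if_splits)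
    qed
    have "a = 0" "b = 0" using a0 b0 by (auto simp: fps_eq_iff)
    then show "rel r dvd F" using F by simp
  qed
qed (simp_all add: PhiE_simps)



lemma compose_nth1: "b $ 0 = 0 \<Longrightarrow> (a oo b) $ 1 = a $ 1 * (b $ 1 :: 'a::field)"
  by (simp add: fps_compose_nth)

lemma fps_inv_nth0[simp]: "fps_inv a $ 0 = 0"
  by (simp add: fps_inv_def)

lemma fps_inv_nth1: "a $ 1 \<noteq> 0 \<Longrightarrow> fps_inv a $ 1 = inverse (a $ 1 :: 'a::field)"
  by (simp add: fps_inv_def field_simps)

lemma fps_inv_nth1_nz: "a $ 1 \<noteq> 0 \<Longrightarrow> fps_inv a $ 1 \<noteq> (0::'a::field)"
  using fps_inv_nth1[of a] by simp

lemma fps_inv_cong: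
  fixes a b :: "'a::field fps"
  assumes a0: "a $ 0 = 0" and a1: "a $ 1 \<noteq> 0" and b0: "b $ 0 = 0" and b1: "b $ 1 \<noteq> 0"
    and ab: "fcong N a b"
  shows "fcong N (fps_inv a) (fps_inv b)"
proof -
  have "fps_inv a = fps_inv a oo (b oo fps_inv b)" by (simp add: fps_inv_right[OF b0 b1])
  also have "\<dots> = (fps_inv a oo b) oo fps_inv b" by (simp add: fps_compose_assoc b0)
  finally have e: "fps_inv a = (fps_inv a oo b) oo fps_inv b" .
  have "fcong N ((fps_inv a oo b) oo fps_inv b) ((fps_inv a oo a) oo fps_inv b)"
    by (intro fcong_compose_left fcong_compose_right fcong_sym[OF ab])
  also have "(fps_inv a oo a) = fps_X" by (rule fps_inv[OF a0 a1])
  finally show ?thesis using e b0 by (simp add: fps_inv_def)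
qed

lemma mX_compose[simp]: "w $ 0 = 0 \<Longrightarrow> (- fps_X) oo w = - (w::'a::field fps)"
  by (simp add: fps_compose_uminus)

lemma compose_mX_mX: "(a oo - fps_X) oo - fps_X = (a :: 'a::field fps)"
proof -
  have "(a oo - fps_X) oo - fps_X = a oo ((- fps_X) oo (- fps_X))"
    by (rule fps_compose_assoc[symmetric]) simp_all
  also have "(- fps_X) oo (- fps_X :: 'a fps) = fps_X" by simp
  finally show ?thesis by simp
qed

definition Nc :: "'a::field fps \<Rightarrow> 'a fps" where "Nc v = - (v oo - fps_X)"

lemma Nc_nth: "Nc v $ n = - ((-1) ^ n * v $ n)"
  by (simp add: Nc_def fps_compose_uminus')

lemma Nc_compose:
  assumes "a $ 0 = 0" "b $ 0 = 0"
  shows "Nc (a oo b) = Nc a oo Nc b"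
proof -
  have "Nc a oo Nc b = - ((a oo - fps_X) oo Nc b)" by (simp add: Nc_def fps_compose_uminus)
  also have "(a oo - fps_X) oo Nc b = a oo ((- fps_X) oo Nc b)"
    using assms by (intro fps_compose_assoc[symmetric]) (simp_all add: Nc_nth)
  also have "(- fps_X) oo Nc b = b oo - fps_X" using assms by (simp add: Nc_def)
  also have "a oo (b oo - fps_X) = (a oo b) oo - fps_X" by (rule fps_compose_assoc) (simp_all add: assms)
  finally show ?thesis by (simp add: Nc_def)
qed

lemma Nc_X[simp]: "Nc fps_X = (fps_X :: 'a::field fps)"
  by (simp add: Nc_def)

lemma Nc_inv_cong:
  fixes u :: "'a::field fps"
  assumes u0: "u $ 0 = 0" and u1: "u $ 1 \<noteq> 0" and c: "fcong N (Nc u) u"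
  shows "fcong N (Nc (fps_inv u)) (fps_inv u)"
proof -
  let ?t = "fps_inv u"
  have t0: "?t $ 0 = 0" by simp
  have Nt0: "Nc ?t $ 0 = 0" by (simp add: Nc_nth)
  have Nu0: "Nc u $ 0 = 0" using u0 by (simp add: Nc_nth)
  have "Nc ?t = Nc ?t oo (u oo ?t)" by (simp add: fps_inv_right[OF u0 u1])
  also have "\<dots> = (Nc ?t oo u) oo ?t" by (simp add: fps_compose_assoc u0)
  finally have e: "Nc ?t = (Nc ?t oo u) oo ?t" .
  have "fcong N ((Nc ?t oo u) oo ?t) ((Nc ?t oo Nc u) oo ?t)"
    by (intro fcong_compose_left fcong_compose_right fcong_sym[OF c])
  also have "Nc ?t oo Nc u = Nc (?t oo u)" by (rule Nc_compose[symmetric]) (simp_all add: u0)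
  also have "?t oo u = fps_X" by (rule fps_inv[OF u0 u1])
  finally show ?thesis using e by simp
qed

lemma fcong_cancel_Xunit:
  fixes w z :: "'a::field fps"
  assumes "fcong (Suc k) (fps_X * w * z) 0" and "w $ 0 \<noteq> 0"
  shows "fcong k z 0"
proof -
  have "fcong k (w * z) 0"
    using assms(1) unfolding fcong_def by (auto simp: mult.assoc fps_X_mult_nth)
  then have "fcong k (inverse w * (w * z)) 0" by (rule fcong_mult_zero_right)
  then show ?thesis using assms(2) by (simp add: mult.assoc[symmetric] inverse_mult_eq_1)
qed

lemma X_factor: "v $ 0 = 0 \<Longrightarrow> v = fps_X * fps_shift 1 (v :: 'a::field fps)"
  by (simp add: fps_eq_iff fps_X_mult_nth)

lemma sq_eq_cases:
  fixes a b :: "'a::field fps"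
  assumes "a ^ 2 = b ^ 2"
  shows "a = b \<or> a = - b"
proof -
  have "(a - b) * (a + b) = 0" using assms by (simp add: algebra_simps power2_eq_square)
  then show ?thesis by (auto simp: eq_neg_iff_add_eq_0)
qed



definition Sev :: "nat \<Rightarrow> 'a::field fps set" where
  "Sev r = {f. fcong (r + 1) (f oo - fps_X) f}"

lemma Xpow_high: "fcong k (- (fps_X ^ k) :: 'a::field fps) (fps_X ^ k)"
  by (simp add: fcong_def)

lemma PhiE_Sev: "PhiE r F \<in> Sev r"
proof -
  have "PhiE r F oo - fps_X = ev2 F (fps_X ^ 2 oo - fps_X) (fps_X ^ (r + 1) oo - fps_X)"
    unfolding PhiE_def by (rule ev2_compose) simp_all
  also have "\<dots> = ev2 F (fps_X ^ 2) ((- fps_X) ^ (r + 1))"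
    by (simp add: fps_X_power_compose del: power_Suc)
  finally have e: "PhiE r F oo - fps_X = ev2 F (fps_X ^ 2) ((- fps_X) ^ (r + 1))" .
  have z1: "fcong (r + 1) ((- fps_X) ^ (r + 1)) (0 :: 'a fps)"
    by (rule fcong_power_zero) (simp add: fcong_1_iff)
  have z2: "fcong (r + 1) (fps_X ^ (r + 1)) (0 :: 'a fps)"
    by (rule fcong_power_zero) (simp add: fcong_1_iff)
  have "fcong (r + 1) ((- fps_X) ^ (r + 1)) (fps_X ^ (r + 1) :: 'a fps)"
    by (rule fcong_trans[OF z1 fcong_sym[OF z2]])
  then have "fcong (r + 1) (ev2 F (fps_X ^ 2) ((- fps_X) ^ (r + 1))) (PhiE r F)"
    unfolding PhiE_def by (intro ev2_cong) (simp_all del: power_Suc)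
  then show ?thesis using e by (simp add: Sev_def)
qed

lemma Sev_odd:
  assumes "f \<in> Sev r" "of_nat 2 \<noteq> (0::'a::field)" "odd n" "n < r + 1"
  shows "f $ n = (0::'a)"
proof -
  have "(f oo - fps_X) $ n = f $ n" using assms(1,4) by (simp add: Sev_def fcong_def)
  then have "- f $ n = f $ n" using assms(3) by (simp add: fps_compose_uminus')
  then have "of_nat 2 * f $ n = 0" by (simp add: algebra_simps mult_2)
  then show ?thesis using assms(2) by simp
qed

lemma Sev_range:
  assumes "even r" "of_nat 2 \<noteq> (0::'a::field)" "f \<in> Sev r"
  shows "f \<in> range (PhiE r :: 'a fps fps \<Rightarrow> 'a fps)"
proof -
  define a where "a = Abs_fps (\<lambda>n. f $ (2 * n))"
  define b where "b = Abs_fps (\<lambda>n. f $ (2 * n + r + 1))"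
  have "PhiE r (fps_const a + fps_const b * Yv) = f"
  proof (subst fps_eq_iff, intro allI)
    fix k
    have "PhiE r (fps_const a + fps_const b * Yv) $ k =
        (a oo fps_X ^ 2) $ k + ((b oo fps_X ^ 2) * fps_X ^ (r + 1)) $ k"
      by (simp add: PhiE_simps del: power_Suc)
    also have "\<dots> = f $ k"
    proof (cases "even k")
      case True
      then have "\<not> even (k - (r + 1))" if "\<not> k < r + 1" using assms(1) that by simp
      then show ?thesis using True
        by (simp add: compose_X2_nth fps_X_power_mult_right_nth a_def del: power_Suc)
    next
      case False
      show ?thesis
      proof (cases "k < r + 1")
        case True
        then show ?thesis using False Sev_odd[OF assms(3,2) False True]
          by (simp add: compose_X2_nth fps_X_power_mult_right_nth del: power_Suc)
      next
        case k: False
        then have "even (k - (r + 1))" using False assms(1) by simp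
        moreover have "2 * ((k - (r + 1)) div 2) + r + 1 = k" using k calculation by simp
        ultimately show ?thesis using False k
          by (simp add: compose_X2_nth fps_X_power_mult_right_nth b_def del: power_Suc)
      qed
    qed
    finally show "PhiE r (fps_const a + fps_const b * Yv) $ k = f $ k" .
  qed
  then show ?thesis by (metis rangeI)
qed

lemma PhiE_compose:
  assumes "t $ 0 = 0"
  shows "PhiE r F oo t = ev2 F (t ^ 2) (t ^ (r + 1))"
  unfolding PhiE_def
  by (subst ev2_compose) (simp_all add: assms fps_X_power_compose del: power_Suc)

lemma compose_Sev:
  assumes t0: "t $ 0 = 0" and t2: "t ^ 2 \<in> Sev r"
  shows "PhiE r F oo t \<in> Sev r"
proof -
  have p0: "(t ^ 2) $ 0 = 0" "(t ^ (r + 1)) $ 0 = 0" using t0 by (simp_all add: fps_nth_power_0 del: power_Suc)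
  have "(PhiE r F oo t) oo - fps_X = ev2 F (t ^ 2 oo - fps_X) (t ^ (r + 1) oo - fps_X)"
    unfolding PhiE_compose[OF t0] by (rule ev2_compose) (simp_all add: p0 t0 del: power_Suc)
  moreover have "fcong (r + 1) (ev2 F (t ^ 2 oo - fps_X) (t ^ (r + 1) oo - fps_X)) (ev2 F (t ^ 2) (t ^ (r + 1)))"
  proof (rule ev2_cong)
    show "fcong (r + 1) (t ^ 2 oo - fps_X) (t ^ 2)" using t2 by (simp add: Sev_def)
    have z1: "fcong (r + 1) (t ^ (r + 1) oo - fps_X) 0"
      unfolding fps_compose_power[symmetric, of "- fps_X", simplified]
      by (rule fcong_power_zero) (simp add: fcong_1_iff t0)
    have z2: "fcong (r + 1) (t ^ (r + 1)) 0"
      by (rule fcong_power_zero) (simp add: fcong_1_iff t0)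
    show "fcong (r + 1) (t ^ (r + 1) oo - fps_X) (t ^ (r + 1))"
      by (rule fcong_trans[OF z1 fcong_sym[OF z2]])
  qed (simp_all add: p0 t0 del: power_Suc)
  ultimately show ?thesis by (simp add: Sev_def PhiE_compose[OF t0] del: power_Suc)
qed

lemma sq_Sev:
  assumes v0: "v $ 0 = 0" and c: "fcong r (Nc v) v"
  shows "v ^ 2 \<in> Sev r"
proof -
  have "v ^ 2 oo - fps_X = (v oo - fps_X) ^ 2" by (simp add: fps_compose_power)
  also have "\<dots> = Nc v ^ 2" by (simp add: Nc_def)
  finally have e: "v ^ 2 oo - fps_X = Nc v ^ 2" .
  have "fcong (r + 1) ((Nc v - v) * (Nc v + v)) 0"
  proof (rule fcong_mult_zero)
    show "fcong r (Nc v - v) 0" using c by (simp add: fcong_iff_diff[symmetric])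
    show "fcong 1 (Nc v + v) 0" using v0 by (simp add: fcong_1_iff Nc_nth)
  qed
  moreover have "(Nc v - v) * (Nc v + v) = Nc v ^ 2 - v ^ 2" by (simp add: power2_eq_square algebra_simps)
  ultimately have "fcong (r + 1) (Nc v ^ 2) (v ^ 2)"
    using fcong_iff_diff by metis
  then show ?thesis using e by (simp add: Sev_def)
qed



lemma two_ne: "of_nat 2 \<noteq> (0::'a::field) \<Longrightarrow> (2::'a) \<noteq> 0"
  by simp

lemma sq1_cases: "(c::'a::field) * c = 1 \<Longrightarrow> c = 1 \<or> c = -1"
proof -
  assume "c * c = 1"
  then have "(c - 1) * (c + 1) = 0" by (simp add: algebra_simps)
  then show ?thesis by (auto simp: eq_neg_iff_add_eq_0)
qed

lemma unit_Xv_minus: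
  fixes c :: "'a::field"
  assumes "c \<noteq> 0"
  shows "(Xv - fps_const (fps_const c)) * fps_const (inverse (fps_X - fps_const c)) = (1 :: 'a fps fps)"
proof -
  have "(fps_X - fps_const c) * inverse (fps_X - fps_const c) = (1::'a fps)"
    by (rule inverse_mult_eq_1') (simp add: assms)
  then show ?thesis by (simp add: Xv_def)
qed

lemma even_case:
  fixes \<sigma> :: "'a::field fps fps set \<Rightarrow> 'a fps fps set"
  assumes ev: "even r" and two: "of_nat 2 \<noteq> (0::'a)" and inv: "nontriv_involution r \<sigma>"
  shows "\<exists>\<tau>. kalg_aut r \<tau> \<and> (let \<rho> = (\<lambda>a. \<tau> (\<sigma> (inv_into (carrier (A_ring r)) \<tau> a))) in
           \<rho> (cls r Xv) = cls r Xv \<and> \<rho> (cls r Yv) = cls r (- Yv))"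
proof -
  interpret M: model r "PhiE r :: 'a fps fps \<Rightarrow> 'a fps" by (rule model_even[OF ev])
  have k: "kalg_aut r \<sigma>" using inv by (simp add: nontriv_involution_def)
  have two': "(2::'a) \<noteq> 0" using two by simp
  define s where "s = M.sig \<sigma>"
  define b where "b F = s (PhiE r F)" for F
  have b_add: "b (F + G) = b F + b G" for F G
    by (simp add: b_def s_def PhiE_simps(1) M.sig_add[OF k])
  have b_mult: "b (F * G) = b F * b G" for F G
    by (simp add: b_def s_def PhiE_simps(2) M.sig_mult[OF k])
  have PhiE_cc: "PhiE r (fps_const (fps_const c)) = fps_const c" for c
    by (simp add: PhiE_simps)
  have b_const: "b (fps_const (fps_const c)) = fps_const c" for c
    using M.sig_const[OF k, of c] by (simp add: b_def s_def PhiE_cc)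
  have hb: "is_hom2 b" by (simp add: is_hom2_def b_add b_mult b_const)
  have b_diff: "b (F - G) = b F - b G" for F G
    using b_add[of "F - G" G] by (simp add: algebra_simps)
  define g where "g = b Xv"
  define h where "h = b Yv"
  have g0: "g $ 0 = 0"
  proof (rule ccontr)
    assume c: "g $ 0 \<noteq> 0"
    let ?W = "fps_const (inverse (fps_X - fps_const (g $ 0)))"
    have "b ((Xv - fps_const (fps_const (g $ 0))) * ?W) = 1"
      using unit_Xv_minus[OF c] is_hom2_one[OF hb] by simp
    then have "(g - fps_const (g $ 0)) * b ?W = 1"
      by (simp add: b_mult b_diff b_const g_def)
    then have "((g - fps_const (g $ 0)) * b ?W) $ 0 = 1" by simp
    then show False by simp
  qed
  have PhiE_diff: "PhiE r (F - G) = PhiE r F - PhiE r G" for F G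
    using PhiE_simps(1)[of r "F - G" G] by (simp add: algebra_simps)
  have "PhiE r (Yv ^ 2) = PhiE r (Xv ^ (r + 1))"
    using PhiE_rel[of r] by (simp add: rel_def PhiE_diff del: power_Suc)
  then have "b (Yv ^ 2) = b (Xv ^ (r + 1))" unfolding b_def by (rule arg_cong)
  then have hh: "h ^ 2 = g ^ (r + 1)"
    by (simp only: h_def g_def is_hom2_power[OF hb])
  have h0: "h $ 0 = 0"
  proof -
    have "(h ^ 2) $ 0 = (g ^ (r + 1)) $ 0" using hh by simp
    then have "h $ 0 ^ 2 = 0" using g0 by (simp add: fps_nth_power_0 del: power_Suc)
    then show ?thesis by simp
  qed
  have rep: "b F = ev2 F g h" for F
    by (rule hom2_unique[OF hb is_hom2_ev2[OF g0 h0]])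
       (simp_all add: g_def h_def ev2_Xv ev2_Yv g0 h0 flip: g_def h_def)
  have b0: "b 0 = 0" by (rule is_hom2_zero[OF hb])
  have inv_s: "s (s (PhiE r F)) = PhiE r F" for F
    unfolding s_def by (rule M.sig_invol[OF inv])
  have s_in: "s (PhiE r F) \<in> range (PhiE r)" for F
    unfolding s_def by (rule M.sig_in[OF k])
  have gnz: "g \<noteq> 0"
  proof
    assume "g = 0"
    then have "s (PhiE r Xv) = PhiE r 0" by (simp add: g_def b_def M.Phi_zero)
    then have "s (s (PhiE r Xv)) = b 0" by (simp add: b_def)
    then have "PhiE r (Xv::'a fps fps) = 0" using inv_s b0 by simp
    then show False by (simp add: PhiE_simps)
  qed
  have hnz: "h \<noteq> 0" using hh gnz by (metis power_not_zero zero_power2)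
  obtain m where m: "r = 2 * m" using ev by blast
  have "g ^ m dvd h"
  proof -
    have "subdegree (h ^ 2) = subdegree (g ^ (r + 1))" using hh by simp
    then have "2 * subdegree h = (2 * m + 1) * subdegree g" using m by (simp del: power_Suc)
    then have "m * subdegree g \<le> subdegree h" by (simp add: algebra_simps)
    then show ?thesis using gnz hnz by (subst fps_dvd_iff) auto
  qed
  then obtain \<phi> where h\<phi>: "h = g ^ m * \<phi>" by (auto simp: dvd_def)
  have \<phi>2: "\<phi> ^ 2 = g"
  proof -
    have "g ^ (2 * m) * \<phi> ^ 2 = g ^ (2 * m) * g"
      using hh unfolding h\<phi> m by (simp add: power_mult_distrib power_mult[symmetric] mult.commute)
    then show ?thesis using gnz by simp
  qed
  have \<phi>r: "\<phi> ^ (r + 1) = h"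
  proof -
    have "\<phi> ^ (r + 1) = \<phi> * (\<phi> ^ 2) ^ m" unfolding m by (simp add: power_mult)
    then show ?thesis using \<phi>2 h\<phi> by (simp add: mult.commute)
  qed
  have \<phi>0: "\<phi> $ 0 = 0"
  proof -
    have "(\<phi> ^ 2) $ 0 = 0" using \<phi>2 g0 by simp
    then show ?thesis by (simp add: fps_nth_power_0)
  qed
  have s\<phi>: "s (PhiE r F) = PhiE r F oo \<phi>" for F
    using rep[of F] unfolding b_def PhiE_compose[OF \<phi>0] \<phi>2 \<phi>r .
  have \<phi>\<phi>0: "(\<phi> oo \<phi>) $ 0 = 0" using \<phi>0 by simp
  have ss: "(PhiE r F oo \<phi>) oo \<phi> = PhiE r F" for F
  proof -
    obtain G where G: "s (PhiE r F) = PhiE r G" using s_in[of F] by auto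
    have "PhiE r F = s (PhiE r G)" using inv_s[of F] G by simp
    also have "\<dots> = (PhiE r F oo \<phi>) oo \<phi>" using G s\<phi> by simp
    finally show ?thesis by simp
  qed
  have \<psi>: "\<phi> oo \<phi> = fps_X"
  proof -
    have e: "(fps_X ^ k oo \<phi>) oo \<phi> = (\<phi> oo \<phi>) ^ k" for k
      using fps_compose_assoc[OF \<phi>0 \<phi>0, of "fps_X ^ k"] fps_X_power_compose[OF \<phi>\<phi>0, of k] by simp
    have 1: "(\<phi> oo \<phi>) ^ 2 = fps_X ^ 2" using ss[of Xv] e[of 2] by (simp add: PhiE_simps)
    have 2: "(\<phi> oo \<phi>) ^ (r + 1) = fps_X ^ (r + 1)" using ss[of Yv] e[of "r + 1"] by (simp add: PhiE_simps del: power_Suc)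
    from sq_eq_cases[OF 1] show ?thesis
    proof
      assume m1: "\<phi> oo \<phi> = - fps_X"
      have "odd (r + 1)" using ev by simp
      then have "(- fps_X) ^ (r + 1) = - (fps_X ^ (r + 1) :: 'a fps)" by (rule power_minus_odd)
      then have "- (fps_X ^ (r + 1)) = (fps_X ^ (r + 1) :: 'a fps)" using 2 m1 by simp
      then have "(- (fps_X ^ (r + 1)) :: 'a fps) $ (r + 1) = (fps_X ^ (r + 1)) $ (r + 1)" by (simp only:)
      then have "(-1::'a) = 1" by (simp add: fps_X_power_nth del: power_Suc)
      then have "(1::'a) + 1 = 0" by (metis add.right_inverse)
      then have "(2::'a) = 0" by (simp only: one_add_one)
      then show ?thesis using two' by simp
    qed
  qed
  define c where "c = \<phi> $ 1"
  have cc: "c * c = 1" using compose_nth1[OF \<phi>0, of \<phi>] \<psi> by (simp add: c_def)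
  have inv2: "inverse (2::'a) * 2 = 1" using two' by simp
  have cm1: "c = -1"
  proof (rule ccontr)
    assume "c \<noteq> -1"
    then have c1: "c = 1" using sq1_cases[OF cc] by simp
    define u where "u = fps_const (inverse 2) * (fps_X + \<phi>)"
    have u0: "u $ 0 = 0" by (simp add: u_def \<phi>0)
    have "u $ 1 = inverse 2 * (1 + c)" by (simp add: u_def c_def)
    then have u1: "u $ 1 = 1" using c1 inv2 by simp
    then have u1': "u $ 1 \<noteq> 0" by simp
    have "u oo \<phi> = fps_const (inverse 2) * ((fps_X oo \<phi>) + (\<phi> oo \<phi>))"
      by (simp add: u_def fps_compose_mult_distrib[OF \<phi>0] fps_compose_add_distrib)
    also have "\<dots> = u" by (simp add: \<psi> \<phi>0 u_def add.commute)
    finally have u\<phi>: "u oo \<phi> = u" .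
    have "\<phi> = (fps_inv u oo u) oo \<phi>" by (simp add: fps_inv[OF u0 u1'] \<phi>0)
    also have "\<dots> = fps_inv u oo (u oo \<phi>)" by (rule fps_compose_assoc[symmetric]) (simp_all add: \<phi>0 u0)
    also have "\<dots> = fps_X" by (simp add: u\<phi> fps_inv[OF u0 u1'])
    finally have "\<phi> = fps_X" .
    then have "s (PhiE r F) = PhiE r F" for F by (simp add: s\<phi>)
    then show False using M.sig_nontriv[OF inv] by (simp add: s_def)
  qed
  define u where "u = fps_const (inverse 2) * (fps_X - \<phi>)"
  have u0: "u $ 0 = 0" by (simp add: u_def \<phi>0)
  have "u $ 1 = inverse 2 * (1 - c)" by (simp add: u_def c_def)
  then have u1: "u $ 1 = 1" using cm1 inv2 by simp
  then have u1': "u $ 1 \<noteq> 0" by simp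
  have u\<phi>: "u oo \<phi> = - u"
  proof -
    have "u oo \<phi> = fps_const (inverse 2) * ((fps_X oo \<phi>) - (\<phi> oo \<phi>))"
      by (simp add: u_def fps_compose_mult_distrib[OF \<phi>0] fps_compose_sub_distrib)
    also have "\<dots> = - u" by (simp add: \<psi> \<phi>0 u_def algebra_simps)
    finally show ?thesis .
  qed
  have Ncu: "fcong r (Nc u) u"
  proof -
    define \<phi>' where "\<phi>' = \<phi> oo - fps_X"
    have "g \<in> Sev r"
    proof -
      obtain G where "s (PhiE r Xv) = PhiE r G" using s_in[of Xv] by auto
      then show ?thesis using PhiE_Sev[of r G] by (simp add: g_def b_def)
    qed
    then have "fcong (r + 1) (\<phi>' ^ 2) (\<phi> ^ 2)"
      unfolding \<phi>'_def using \<phi>2 by (simp add: Sev_def fps_compose_power)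
    then have A0: "fcong (r + 1) (\<phi>' ^ 2 - \<phi> ^ 2) 0" by (simp add: fcong_def)
    have "(\<phi>' - \<phi>) * (\<phi>' + \<phi>) = \<phi>' ^ 2 - \<phi> ^ 2" by (simp add: power2_eq_square algebra_simps)
    then have A: "fcong (r + 1) ((\<phi>' - \<phi>) * (\<phi>' + \<phi>)) 0" using A0 by simp
    have d0: "(\<phi>' - \<phi>) $ 0 = 0" by (simp add: \<phi>'_def \<phi>0)
    define w where "w = fps_shift 1 (\<phi>' - \<phi>)"
    have w0: "w $ 0 \<noteq> 0"
    proof -
      have "w $ 0 = - c - c" by (simp add: w_def \<phi>'_def c_def fps_compose_uminus')
      then show ?thesis using cm1 two' by simp
    qed
    have "fcong (Suc r) (fps_X * w * (\<phi>' + \<phi>)) 0"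
      using A X_factor[OF d0] by (simp add: w_def)
    then have B: "fcong r (\<phi>' + \<phi>) 0" using w0 by (rule fcong_cancel_Xunit)
    have "Nc u - u = fps_const (inverse 2) * (\<phi>' + \<phi>)"
      by (simp add: Nc_def u_def \<phi>'_def fps_compose_mult_distrib fps_compose_sub_distrib algebra_simps)
    then have "fcong r (Nc u - u) 0" using fcong_mult_zero_right[OF B] by simp
    then show ?thesis by (simp add: fcong_def)
  qed
  define \<theta> where "\<theta> = fps_inv u"
  have \<theta>0: "\<theta> $ 0 = 0" by (simp add: \<theta>_def)
  have \<theta>u: "\<theta> oo u = fps_X" unfolding \<theta>_def by (rule fps_inv[OF u0 u1'])
  have u\<theta>: "u oo \<theta> = fps_X" unfolding \<theta>_def by (rule fps_inv_right[OF u0 u1'])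
  have Nc\<theta>: "fcong r (Nc \<theta>) \<theta>" unfolding \<theta>_def by (rule Nc_inv_cong[OF u0 u1' Ncu])
  have u2: "u ^ 2 \<in> Sev r" by (rule sq_Sev[OF u0 Ncu])
  have \<theta>2: "\<theta> ^ 2 \<in> Sev r" by (rule sq_Sev[OF \<theta>0 Nc\<theta>])
  define t where "t f = f oo \<theta>" for f
  define ti where "ti f = f oo u" for f
  have t_in: "t (PhiE r F) \<in> range (PhiE r)" for F
    unfolding t_def by (rule Sev_range[OF ev two compose_Sev[OF \<theta>0 \<theta>2]])
  have ti_in: "ti (PhiE r F) \<in> range (PhiE r)" for F
    unfolding ti_def by (rule Sev_range[OF ev two compose_Sev[OF u0 u2]])
  have t_ti: "t (ti f) = f" for f
    unfolding t_def ti_def by (simp add: fps_compose_assoc[OF \<theta>0 u0, symmetric] u\<theta>)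
  have ti_t: "ti (t f) = f" for f
    unfolding t_def ti_def by (simp add: fps_compose_assoc[OF u0 \<theta>0, symmetric] \<theta>u)
  have t_add: "t (f1 + f2) = t f1 + t f2" for f1 f2 by (simp add: t_def fps_compose_add_distrib)
  have t_mult: "t (f1 * f2) = t f1 * t f2" for f1 f2 by (simp add: t_def fps_compose_mult_distrib[OF \<theta>0])
  have t_const: "t (PhiE r (fps_const (fps_const c))) = PhiE r (fps_const (fps_const c))" for c
    by (simp add: t_def PhiE_cc)
  define T where "T = (\<lambda>C. cls r (M.pre (t (M.iota C))))"
  have conj: "t (M.sig \<sigma> (ti (PhiE r F))) = PhiE r F oo - fps_X" for F
  proof -
    obtain F' where F': "ti (PhiE r F) = PhiE r F'" using ti_in[of F] by auto
    have "t (M.sig \<sigma> (ti (PhiE r F))) = ((PhiE r F oo u) oo \<phi>) oo \<theta>"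
      using F' s\<phi>[of F'] by (simp add: s_def t_def ti_def)
    also have "\<dots> = PhiE r F oo ((u oo \<phi>) oo \<theta>)"
      by (simp add: fps_compose_assoc \<phi>0 u0 \<theta>0)
    also have "(u oo \<phi>) oo \<theta> = - fps_X" by (simp add: u\<phi> fps_compose_uminus u\<theta>)
    finally show ?thesis .
  qed
  have res: "kalg_aut r T \<and> (\<forall>F G. t (M.sig \<sigma> (ti (PhiE r F))) = PhiE r G \<longrightarrow>
           T (\<sigma> (inv_into (carrier (A_ring r)) T (cls r F))) = cls r G)"
    using M.conj_aut[of t ti, OF t_in ti_in _ _ t_add t_mult t_const k] t_ti ti_t
    unfolding T_def by blast
  have cX: "t (M.sig \<sigma> (ti (PhiE r Xv))) = PhiE r Xv"
    using conj[of Xv] by (simp add: PhiE_simps fps_X_power_compose)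
  have cY: "t (M.sig \<sigma> (ti (PhiE r Yv))) = PhiE r (- Yv)"
  proof -
    have "odd (r + 1)" using ev by simp
    then have "(- fps_X) ^ (r + 1) = - (fps_X ^ (r + 1) :: 'a fps)" by (rule power_minus_odd)
    moreover have "PhiE r (- Yv) = - PhiE r (Yv :: 'a fps fps)"
      by (metis M.Phi_diff M.Phi_zero diff_0)
    ultimately show ?thesis
      using conj[of Yv] by (simp add: PhiE_simps fps_X_power_compose del: power_Suc)
  qed
  show ?thesis
    using res cX cY by (intro exI[of _ T]) (simp add: Let_def)
qed



datatype 'a pr = Pr (p1: "'a fps") (p2: "'a fps")

instantiation pr :: (field) comm_ring_1
begin
definition zero_pr_def: "0 = Pr 0 0"
definition one_pr_def: "1 = Pr 1 1"
definition plus_pr_def: "x + y = Pr (p1 x + p1 y) (p2 x + p2 y)"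
definition minus_pr_def: "x - y = Pr (p1 x - p1 y) (p2 x - p2 y)"
definition uminus_pr_def: "- x = Pr (- p1 x) (- p2 x)"
definition times_pr_def: "x * y = Pr (p1 x * p1 y) (p2 x * p2 y)"
instance
  by standard (auto intro!: pr.expand simp: zero_pr_def one_pr_def plus_pr_def minus_pr_def
      uminus_pr_def times_pr_def algebra_simps)
end

lemma pr_simps[simp]:
  "p1 0 = 0" "p2 0 = 0" "p1 1 = 1" "p2 1 = 1"
  "p1 (x + y) = p1 x + p1 y" "p2 (x + y) = p2 x + p2 y"
  "p1 (x - y) = p1 x - p1 y" "p2 (x - y) = p2 x - p2 y"
  "p1 (- x) = - p1 x" "p2 (- x) = - p2 x"
  "p1 (x * y) = p1 x * p1 y" "p2 (x * y) = p2 x * p2 y"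
  by (simp_all add: zero_pr_def one_pr_def plus_pr_def minus_pr_def uminus_pr_def times_pr_def)

lemma pr_power[simp]: "p1 (x ^ n) = p1 x ^ n" "p2 (x ^ n) = p2 x ^ n"
  by (induction n) simp_all

lemma pr_eq_iff: "x = y \<longleftrightarrow> p1 x = p1 y \<and> p2 x = p2 y"
  by (auto intro: pr.expand)

definition PhiO :: "nat \<Rightarrow> 'a::field fps fps \<Rightarrow> 'a pr" where
  "PhiO m F = Pr (ev2 F fps_X (fps_X ^ m)) (ev2 F fps_X (- (fps_X ^ m)))"

lemma PhiO_simps:
  assumes "m \<ge> 1"
  shows
  "PhiO m (F + G) = PhiO m F + PhiO m G"
  "PhiO m (F * G) = PhiO m F * PhiO m G"
  "PhiO m 1 = 1"
  "PhiO m Xv = Pr fps_X fps_X"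
  "PhiO m Yv = Pr (fps_X ^ m) (- (fps_X ^ m))"
  "PhiO m (fps_const a) = Pr a a"
  using assms by (simp_all add: PhiO_def ev2_add ev2_mult ev2_one ev2_Xv ev2_Yv ev2_const pr_eq_iff)

lemma p1_PhiO: "p1 (PhiO m F) = ev2 F fps_X (fps_X ^ m)" by (simp add: PhiO_def)
lemma p2_PhiO: "p2 (PhiO m F) = ev2 F fps_X (- (fps_X ^ m))" by (simp add: PhiO_def)

lemma model_odd:
  assumes r: "r + 1 = 2 * m" and two: "of_nat 2 \<noteq> (0::'a::field)"
  shows "model r (PhiO m :: 'a fps fps \<Rightarrow> 'a pr)"
proof -
  have m1: "m \<ge> 1" using r by simp
  have d: "PhiO m (F - G) = PhiO m F - PhiO m (G :: 'a fps fps)" for F G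
    using PhiO_simps(1)[OF m1, of "F - G" G] by (simp add: algebra_simps)
  have p: "PhiO m (F ^ n) = PhiO m F ^ n" for F :: "'a fps fps" and n
    by (induction n) (simp_all add: PhiO_simps[OF m1])
  have rel0: "PhiO m (rel r :: 'a fps fps) = 0"
  proof -
    have "PhiO m (rel r :: 'a fps fps) = Pr (fps_X ^ m) (- (fps_X ^ m)) ^ 2 - Pr fps_X fps_X ^ (2 * m)"
      unfolding rel_def r[symmetric] by (simp only: d p PhiO_simps[OF m1])
    then show ?thesis by (simp add: pr_eq_iff power_mult[symmetric] mult.commute)
  qed
  show ?thesis
  proof
    fix F :: "'a fps fps"
    show "PhiO m F = 0 \<longleftrightarrow> rel r dvd F"
    proof
      assume "rel r dvd F"
      then obtain Q where "F = rel r * Q" by (auto simp: dvd_def)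
      then show "PhiO m F = 0" by (simp add: PhiO_simps[OF m1] rel0)
    next
      assume F0: "PhiO m F = 0"
      obtain Q a b where F: "F = Q * rel r + fps_const a + fps_const b * Yv" using division by blast
      have "PhiO m F = Pr a a + Pr b b * Pr (fps_X ^ m) (- (fps_X ^ m))"
        unfolding F by (simp add: PhiO_simps[OF m1] rel0)
      also have "\<dots> = Pr (a + b * fps_X ^ m) (a - b * fps_X ^ m)" by (simp add: pr_eq_iff)
      finally have e: "Pr (a + b * fps_X ^ m) (a - b * fps_X ^ m) = 0" using F0 by simp
      have e1: "a + b * fps_X ^ m = 0" using arg_cong[OF e, of p1] by (simp only: pr.sel pr_simps)
      have e2: "a - b * fps_X ^ m = 0" using arg_cong[OF e, of p2] by (simp only: pr.sel pr_simps)
      have an: "a $ n = 0" for n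
      proof -
        have s1: "a $ n + (b * fps_X ^ m) $ n = 0" using arg_cong[OF e1, of "\<lambda>f. f $ n"] by simp
        have s2: "a $ n - (b * fps_X ^ m) $ n = 0" using arg_cong[OF e2, of "\<lambda>f. f $ n"] by simp
        have c: "(b * fps_X ^ m) $ n = a $ n" using s2 by (metis right_minus_eq)
        have "a $ n + a $ n = 0" using s1 unfolding c .
        then have "(2::'a) * a $ n = 0" by (simp only: mult_2)
        then show ?thesis using two by simp
      qed
      then have a0: "a = 0" by (simp add: fps_eq_iff)
      then have "b * fps_X ^ m = 0" using e1 by simp
      then have "b = 0" by simp
      then show "rel r dvd F" using F a0 by simp
    qed
  qed (simp_all add: PhiO_simps[OF m1])
qed



definition S2 :: "nat \<Rightarrow> 'a::field pr set" where
  "S2 m = {x. fcong m (p1 x) (p2 x)}"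

lemma PhiO_S2:
  assumes "m \<ge> 1"
  shows "PhiO m F \<in> S2 m"
proof -
  have z1: "fcong m (fps_X ^ m) (0 :: 'a fps)" by (rule fcong_power_zero) (simp add: fcong_1_iff)
  have z2: "fcong m (- (fps_X ^ m)) (0 :: 'a fps)" using fcong_uminus[OF z1] by simp
  have "fcong m (ev2 F fps_X (fps_X ^ m)) (ev2 F fps_X (- (fps_X ^ m)))"
    by (rule ev2_cong) (use assms z1 z2 in \<open>auto intro: fcong_trans fcong_sym\<close>)
  then show ?thesis by (simp add: S2_def PhiO_def)
qed

lemma S2_range:
  assumes "m \<ge> 1" "of_nat 2 \<noteq> (0::'a::field)" "x \<in> S2 m"
  shows "x \<in> range (PhiO m :: 'a fps fps \<Rightarrow> 'a pr)"
proof -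
  have two: "(2::'a) \<noteq> 0" using assms(2) by simp
  have "(4::'a) = 2 * 2" by simp
  then have four: "(4::'a) \<noteq> 0" using two by (simp only: mult_eq_0_iff) simp
  define a where "a = fps_const (inverse (2::'a)) * (p1 x + p2 x)"
  define d where "d = fps_const (inverse (2::'a)) * (p1 x - p2 x)"
  have "fcong m (p1 x - p2 x) 0" using assms(3) by (simp add: S2_def fcong_def)
  then have "fcong m d 0" unfolding d_def by (rule fcong_mult_zero_right)
  then have dX: "fps_X ^ m * fps_shift m d = d"
    by (simp add: fps_eq_iff fps_X_power_mult_nth fcong_def)
  have ad1: "a + d = p1 x"
  proof (rule fps_ext)
    fix n
    have "(a + d) $ n = inverse 2 * (p1 x $ n + p2 x $ n) + inverse 2 * (p1 x $ n - p2 x $ n)"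
      unfolding a_def d_def by (simp only: fps_add_nth fps_sub_nth fps_mult_left_const_nth)
    also have "\<dots> = p1 x $ n" using two by (simp add: field_simps)
    finally show "(a + d) $ n = p1 x $ n" .
  qed
  have ad2: "a - d = p2 x"
  proof (rule fps_ext)
    fix n
    have "(a - d) $ n = inverse 2 * (p1 x $ n + p2 x $ n) - inverse 2 * (p1 x $ n - p2 x $ n)"
      unfolding a_def d_def by (simp only: fps_add_nth fps_sub_nth fps_mult_left_const_nth)
    also have "\<dots> = p2 x $ n" using two four by (simp add: field_simps)
    finally show "(a - d) $ n = p2 x $ n" .
  qed
  have "PhiO m (fps_const a + fps_const (fps_shift m d) * Yv) = x"
    using assms(1) dX ad1 ad2 by (simp add: PhiO_simps pr_eq_iff mult.commute)
  then show ?thesis by (metis rangeI)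
qed

definition tm :: "bool \<Rightarrow> 'a::field fps \<Rightarrow> 'a fps \<Rightarrow> 'a pr \<Rightarrow> 'a pr" where
  "tm sw a b x = (if sw then Pr (p2 x oo a) (p1 x oo b) else Pr (p1 x oo a) (p2 x oo b))"

lemma tm_add: "tm sw a b (x + y) = tm sw a b x + tm sw a b y"
  by (simp add: tm_def pr_eq_iff fps_compose_add_distrib)

lemma tm_mult: "a $ 0 = 0 \<Longrightarrow> b $ 0 = 0 \<Longrightarrow> tm sw a b (x * y) = tm sw a b x * tm sw a b y"
  by (simp add: tm_def pr_eq_iff fps_compose_mult_distrib)

lemma tm_const: "tm sw a b (Pr (fps_const c) (fps_const c)) = Pr (fps_const c) (fps_const c)"
  by (simp add: tm_def)

lemma tm_S2:
  assumes "fcong m a b" "x \<in> S2 m"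
  shows "tm sw a b x \<in> S2 m"
proof -
  have 1: "fcong m (p1 x oo a) (p2 x oo b)"
    by (rule fcong_trans[OF fcong_compose_left fcong_compose_right]) (use assms in \<open>simp_all add: S2_def\<close>)
  have 2: "fcong m (p2 x oo a) (p1 x oo b)"
    by (rule fcong_trans[OF fcong_compose_left fcong_compose_right])
       (use assms in \<open>simp_all add: S2_def fcong_sym\<close>)
  show ?thesis using 1 2 by (simp add: tm_def S2_def)
qed

lemma tm_comp:
  assumes "a1 $ 0 = 0" "b1 $ 0 = 0" "a2 $ 0 = 0" "b2 $ 0 = 0"
  shows "tm s1 a1 b1 (tm s2 a2 b2 x) =
    tm (s1 \<noteq> s2) (if s1 then b2 oo a1 else a2 oo a1) (if s1 then a2 oo b1 else b2 oo b1) x"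
  using assms by (cases s1; cases s2) (simp_all add: tm_def fps_compose_assoc)

lemma tm_id: "tm False fps_X fps_X x = x"
  by (simp add: tm_def pr_eq_iff)


lemma odd_finish:
  fixes \<sigma> :: "'a::field fps fps set \<Rightarrow> 'a fps fps set"
  assumes M: "model r (PhiO m :: 'a fps fps \<Rightarrow> 'a pr)" and m1: "m \<ge> 1" and two: "of_nat 2 \<noteq> (0::'a)"
    and k: "kalg_aut r \<sigma>"
    and sform: "\<And>F. model.sig r (PhiO m) \<sigma> (PhiO m F) = tm sws g1 g2 (PhiO m F)"
    and z: "\<theta>1 $ 0 = 0" "\<theta>2 $ 0 = 0" "u1 $ 0 = 0" "u2 $ 0 = 0" "g1 $ 0 = 0" "g2 $ 0 = 0"
    and i1: "u1 oo \<theta>1 = fps_X" "\<theta>1 oo u1 = fps_X" and i2: "u2 oo \<theta>2 = fps_X" "\<theta>2 oo u2 = fps_X"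
    and c\<theta>: "fcong m \<theta>1 \<theta>2" and cu: "fcong m u1 u2"
    and comp: "\<And>x. tm sw \<theta>1 \<theta>2 (tm sws g1 g2 (tm sw (if sw then u2 else u1) (if sw then u1 else u2) x)) = tm swr e1 e2 x"
  shows "\<exists>\<tau>. kalg_aut r \<tau> \<and> (\<forall>F G. tm swr e1 e2 (PhiO m F) = PhiO m G \<longrightarrow>
           \<tau> (\<sigma> (inv_into (carrier (A_ring r)) \<tau> (cls r F))) = cls r G)"
proof -
  interpret M: model r "PhiO m :: 'a fps fps \<Rightarrow> 'a pr" by (rule M)
  define t where "t = tm sw \<theta>1 \<theta>2"
  define ti where "ti = tm sw (if sw then u2 else u1) (if sw then u1 else u2)"
  have t_in: "t (PhiO m F) \<in> range (PhiO m)" for F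
    unfolding t_def by (intro S2_range[OF m1 two] tm_S2 c\<theta> PhiO_S2 m1)
  have cu': "fcong m (if sw then u2 else u1) (if sw then u1 else u2)"
    using cu by (auto intro: fcong_sym)
  have ti_in: "ti (PhiO m F) \<in> range (PhiO m)" for F
    unfolding ti_def by (intro S2_range[OF m1 two] tm_S2 cu' PhiO_S2 m1)
  have t_ti: "t (ti x) = x" for x
    unfolding t_def ti_def using z i1 i2 by (cases sw) (simp_all add: tm_comp tm_id)
  have ti_t: "ti (t x) = x" for x
    unfolding t_def ti_def using z i1 i2 by (cases sw) (simp_all add: tm_comp tm_id)
  have t_add: "t (x + y) = t x + t y" for x y by (simp add: t_def tm_add)
  have t_mult: "t (x * y) = t x * t y" for x y using z by (simp add: t_def tm_mult)
  have t_const: "t (PhiO m (fps_const (fps_const c))) = PhiO m (fps_const (fps_const c))" for c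
    by (simp add: t_def PhiO_simps[OF m1] tm_const)
  define T where "T = (\<lambda>C. cls r (M.pre (t (M.iota C))))"
  have res: "kalg_aut r T \<and> (\<forall>F G. t (M.sig \<sigma> (ti (PhiO m F))) = PhiO m G \<longrightarrow>
           T (\<sigma> (inv_into (carrier (A_ring r)) T (cls r F))) = cls r G)"
    using M.conj_aut[of t ti, OF t_in ti_in _ _ t_add t_mult t_const k] t_ti ti_t
    unfolding T_def by blast
  have conj: "t (M.sig \<sigma> (ti (PhiO m F))) = tm swr e1 e2 (PhiO m F)" for F
  proof -
    obtain F' where F': "ti (PhiO m F) = PhiO m F'" using ti_in[of F] by auto
    have "t (M.sig \<sigma> (ti (PhiO m F))) = t (tm sws g1 g2 (ti (PhiO m F)))"
      using F' sform[of F'] by simp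
    also have "\<dots> = tm swr e1 e2 (PhiO m F)" unfolding t_def ti_def by (rule comp)
    finally show ?thesis .
  qed
  show ?thesis using res conj by (intro exI[of _ T]) auto
qed



lemma hom2_local:
  assumes hb: "is_hom2 (b :: 'a::field fps fps \<Rightarrow> 'a fps)"
  shows "b Xv $ 0 = 0"
proof (rule ccontr)
  let ?g = "b Xv"
  assume c: "?g $ 0 \<noteq> 0"
  let ?W = "fps_const (inverse (fps_X - fps_const (?g $ 0)))"
  have b_add: "b (F + G) = b F + b G" for F G using hb by (simp add: is_hom2_def)
  have b_mult: "b (F * G) = b F * b G" for F G using hb by (simp add: is_hom2_def)
  have b_const: "b (fps_const (fps_const c)) = fps_const c" for c using hb by (simp add: is_hom2_def)
  have b_diff: "b (F - G) = b F - b G" for F G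
    using b_add[of "F - G" G] by (simp add: algebra_simps)
  have "b ((Xv - fps_const (fps_const (?g $ 0))) * ?W) = 1"
    using unit_Xv_minus[OF c] is_hom2_one[OF hb] by simp
  then have "(?g - fps_const (?g $ 0)) * b ?W = 1"
    by (simp add: b_mult b_diff b_const)
  then have "((?g - fps_const (?g $ 0)) * b ?W) $ 0 = 1" by simp
  then show False by simp
qed

lemma lin:
  fixes \<phi> :: "'a::field fps"
  assumes \<phi>0: "\<phi> $ 0 = 0" and \<psi>: "\<phi> oo \<phi> = fps_X" and c: "\<phi> $ 1 = c" and cc: "c * c = 1"
    and two: "(2::'a) \<noteq> 0"
  defines "u \<equiv> fps_const (inverse 2) * (fps_X + fps_const c * \<phi>)"
  shows "u $ 0 = 0" "u $ 1 = 1" "u oo \<phi> = fps_const c * u"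
proof -
  show "u $ 0 = 0" by (simp add: u_def \<phi>0)
  have c': "\<phi> $ Suc 0 = c" using c by simp
  have "u $ 1 = inverse 2 * (1 + c * c)" by (simp add: u_def c')
  then show "u $ 1 = 1" using cc two by simp
  have "u oo \<phi> = fps_const (inverse 2) * ((fps_X oo \<phi>) + fps_const c * (\<phi> oo \<phi>))"
    by (simp add: u_def fps_compose_mult_distrib[OF \<phi>0] fps_compose_add_distrib)
  also have "\<dots> = fps_const (inverse 2) * (\<phi> + fps_const c * fps_X)" by (simp add: \<psi> \<phi>0)
  also have "\<dots> = fps_const c * u"
  proof -
    have "fps_const c * (fps_X + fps_const c * \<phi>) = fps_const c * fps_X + fps_const (c * c) * \<phi>"
      by (simp add: algebra_simps)
    then show ?thesis using cc by (simp add: u_def algebra_simps)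
  qed
  finally show "u oo \<phi> = fps_const c * u" .
qed

lemma lin_conj:
  fixes \<phi> u :: "'a::field fps"
  assumes \<phi>0: "\<phi> $ 0 = 0" and u0: "u $ 0 = 0" and u1: "u $ 1 \<noteq> 0" and uc: "u oo \<phi> = fps_const c * u"
  shows "(u oo \<phi>) oo fps_inv u = fps_const c * fps_X"
  using fps_inv_right[OF u0 u1] by (simp add: uc fps_compose_mult_distrib)

lemma lin_id:
  fixes \<phi> :: "'a::field fps"
  assumes \<phi>0: "\<phi> $ 0 = 0" and \<psi>: "\<phi> oo \<phi> = fps_X" and c: "\<phi> $ 1 = 1" and two: "(2::'a) \<noteq> 0"
  shows "\<phi> = fps_X"
proof -
  define u where "u = fps_const (inverse 2) * (fps_X + fps_const 1 * \<phi>)"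
  have u: "u $ 0 = 0" "u $ 1 = 1" "u oo \<phi> = fps_const 1 * u"
    using lin[OF \<phi>0 \<psi> c _ two] unfolding u_def by simp_all
  have u1': "u $ 1 \<noteq> 0" using u by simp
  have "\<phi> = (fps_inv u oo u) oo \<phi>" by (simp add: fps_inv[OF u(1) u1'] \<phi>0)
  also have "\<dots> = fps_inv u oo (u oo \<phi>)" by (rule fps_compose_assoc[symmetric]) (simp_all add: \<phi>0 u)
  also have "\<dots> = fps_X" using u by (simp add: fps_inv[OF u(1) u1'])
  finally show ?thesis .
qed

lemma PhiO_neg:
  assumes "m \<ge> 1" shows "PhiO m (- F) = - PhiO m (F :: 'a::field fps fps)"
proof -
  have "PhiO m (- F) + PhiO m F = PhiO m (- F + F)" by (simp only: PhiO_simps(1)[OF assms])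
  also have "\<dots> = PhiO m (fps_const 0)" by simp
  also have "\<dots> = 0" using PhiO_simps(6)[OF assms, of 0] by (simp add: zero_pr_def)
  finally show ?thesis by (simp add: eq_neg_iff_add_eq_0)
qed

lemma tm_vals:
  assumes m1: "m \<ge> 1"
  shows "tm True fps_X fps_X (PhiO m Xv) = PhiO m (Xv :: 'a::field fps fps)"
    "tm True fps_X fps_X (PhiO m Yv) = PhiO m (- Yv :: 'a::field fps fps)"
    "tm True (- fps_X) (- fps_X) (PhiO m Xv) = PhiO m (- Xv :: 'a::field fps fps)"
    "even m \<Longrightarrow> tm True (- fps_X) (- fps_X) (PhiO m Yv) = PhiO m (- Yv :: 'a::field fps fps)"
    "odd m \<Longrightarrow> tm True (- fps_X) (- fps_X) (PhiO m Yv) = PhiO m (Yv :: 'a::field fps fps)"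
    "tm False (- fps_X) (- fps_X) (PhiO m Xv) = PhiO m (- Xv :: 'a::field fps fps)"
    "even m \<Longrightarrow> tm False (- fps_X) (- fps_X) (PhiO m Yv) = PhiO m (Yv :: 'a::field fps fps)"
    "odd m \<Longrightarrow> tm False (- fps_X) (- fps_X) (PhiO m Yv) = PhiO m (- Yv :: 'a::field fps fps)"
    "m = 1 \<Longrightarrow> tm False fps_X (- fps_X) (PhiO m Xv) = PhiO m (Yv :: 'a::field fps fps)"
    "m = 1 \<Longrightarrow> tm False fps_X (- fps_X) (PhiO m Yv) = PhiO m (Xv :: 'a::field fps fps)"
  using m1 by (simp_all add: tm_def PhiO_simps PhiO_neg pr_eq_iff fps_X_power_compose fps_compose_uminus)



lemma ev2_pm:
  assumes g0: "g $ 0 = 0" and m1: "m \<ge> 1"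
  shows "ev2 F g (g ^ m) = p1 (PhiO m F) oo g" "ev2 F g (- (g ^ m)) = p2 (PhiO m F) oo g"
proof -
  have "p1 (PhiO m F) oo g = ev2 F (fps_X oo g) (fps_X ^ m oo g)"
    unfolding p1_PhiO using m1 by (intro ev2_compose) (simp_all add: g0)
  then show "ev2 F g (g ^ m) = p1 (PhiO m F) oo g" by (simp add: g0 fps_X_power_compose)
  have "p2 (PhiO m F) oo g = ev2 F (fps_X oo g) (- (fps_X ^ m) oo g)"
    unfolding p2_PhiO using m1 by (intro ev2_compose) (simp_all add: g0)
  then show "ev2 F g (- (g ^ m)) = p2 (PhiO m F) oo g"
    by (simp add: g0 fps_X_power_compose fps_compose_uminus)
qed

lemma odd_structure:
  fixes \<sigma> :: "'a::field fps fps set \<Rightarrow> 'a fps fps set"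
  assumes r: "r + 1 = 2 * m" and two: "of_nat 2 \<noteq> (0::'a)" and inv: "nontriv_involution r \<sigma>"
  shows "\<exists>sws g1 g2. g1 $ 0 = 0 \<and> g2 $ 0 = 0 \<and>
     (\<forall>F. model.sig r (PhiO m) \<sigma> (PhiO m F) = tm sws g1 g2 (PhiO m F))"
proof -
  have m1: "m \<ge> 1" using r by simp
  interpret M: model r "PhiO m :: 'a fps fps \<Rightarrow> 'a pr" by (rule model_odd[OF r two])
  have k: "kalg_aut r \<sigma>" using inv by (simp add: nontriv_involution_def)
  define s where "s = M.sig \<sigma>"
  define b where "b F = s (PhiO m F)" for F
  have b_add: "b (F + G) = b F + b G" for F G
    by (simp add: b_def s_def PhiO_simps(1)[OF m1] M.sig_add[OF k])
  have b_mult: "b (F * G) = b F * b G" for F G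
    by (simp add: b_def s_def PhiO_simps(2)[OF m1] M.sig_mult[OF k])
  have b_const: "b (fps_const (fps_const c)) = Pr (fps_const c) (fps_const c)" for c
    using M.sig_const[OF k, of c] by (simp add: b_def s_def PhiO_simps(6)[OF m1])
  define b1 where "b1 F = p1 (b F)" for F
  define b2 where "b2 F = p2 (b F)" for F
  have hb1: "is_hom2 b1" by (simp add: is_hom2_def b1_def b_add b_mult b_const)
  have hb2: "is_hom2 b2" by (simp add: is_hom2_def b2_def b_add b_mult b_const)
  define g1 where "g1 = b1 Xv"
  define g2 where "g2 = b2 Xv"
  have g10: "g1 $ 0 = 0" unfolding g1_def by (rule hom2_local[OF hb1])
  have g20: "g2 $ 0 = 0" unfolding g2_def by (rule hom2_local[OF hb2])
  have "PhiO m (Yv ^ 2) = PhiO m (Xv ^ (r + 1) :: 'a fps fps)"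
  proof -
    have "rel r dvd (Yv ^ 2 - Xv ^ (r + 1) :: 'a fps fps)" by (simp add: rel_def)
    then have "PhiO m (Yv ^ 2 - Xv ^ (r + 1) :: 'a fps fps) = 0" using M.Phi_ker by blast
    then show ?thesis by (simp add: M.Phi_diff)
  qed
  then have bb: "b (Yv ^ 2) = b (Xv ^ (r + 1))" unfolding b_def by (rule arg_cong)
  have hh1: "b1 Yv ^ 2 = (g1 ^ m) ^ 2"
    using arg_cong[OF bb, of p1] unfolding r
    by (simp add: b1_def[symmetric] g1_def is_hom2_power[OF hb1] power_mult[symmetric] mult.commute)
  have hh2: "b2 Yv ^ 2 = (g2 ^ m) ^ 2"
    using arg_cong[OF bb, of p2] unfolding r
    by (simp add: b2_def[symmetric] g2_def is_hom2_power[OF hb2] power_mult[symmetric] mult.commute)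
  have rep: "b F = Pr (ev2 F g1 (b1 Yv)) (ev2 F g2 (b2 Yv))" for F
  proof -
    have h10: "b1 Yv $ 0 = 0"
      using sq_eq_cases[OF hh1] g10 m1 by (auto simp: fps_nth_power_0 zero_power)
    have h20: "b2 Yv $ 0 = 0"
      using sq_eq_cases[OF hh2] g20 m1 by (auto simp: fps_nth_power_0 zero_power)
    have "b1 F = ev2 F g1 (b1 Yv)"
      by (rule hom2_unique[OF hb1 is_hom2_ev2[OF g10 h10]]) (simp_all add: g1_def ev2_Xv ev2_Yv g10 h10 flip: g1_def)
    moreover have "b2 F = ev2 F g2 (b2 Yv)"
      by (rule hom2_unique[OF hb2 is_hom2_ev2[OF g20 h20]]) (simp_all add: g2_def ev2_Xv ev2_Yv g20 h20 flip: g2_def)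
    ultimately show ?thesis by (simp add: pr_eq_iff b1_def b2_def)
  qed
  define sel where "sel e x = (if e then p1 x else p2 x)" for e and x :: "'a pr"
  obtain e1 where e1: "b1 Yv = (if e1 then g1 ^ m else - (g1 ^ m))"
    using sq_eq_cases[OF hh1] by (metis (full_types))
  obtain e2 where e2: "b2 Yv = (if e2 then g2 ^ m else - (g2 ^ m))"
    using sq_eq_cases[OF hh2] by (metis (full_types))
  have bform: "b F = Pr (sel e1 (PhiO m F) oo g1) (sel e2 (PhiO m F) oo g2)" for F
    using rep[of F] e1 e2 ev2_pm[OF g10 m1] ev2_pm[OF g20 m1] by (simp add: sel_def)
  have inv_s: "s (s (PhiO m F)) = PhiO m F" for F
    unfolding s_def by (rule M.sig_invol[OF inv])
  have ne: "e1 \<noteq> e2"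
  proof
    assume eq: "e1 = e2"
    define Fa :: "'a fps fps" where "Fa = Xv ^ m"
    define Fb :: "'a fps fps" where "Fb = (if e1 then Yv else - Yv)"
    have PFa: "PhiO m Fa = Pr (fps_X ^ m) (fps_X ^ m)"
      by (simp add: Fa_def M.Phi_power PhiO_simps[OF m1] pr_eq_iff)
    have PFb: "PhiO m Fb = (if e1 then Pr (fps_X ^ m) (- (fps_X ^ m)) else Pr (- (fps_X ^ m)) (fps_X ^ m))"
      by (simp add: Fb_def PhiO_neg[OF m1] PhiO_simps[OF m1] pr_eq_iff)
    have "sel e1 (PhiO m Fa) = sel e1 (PhiO m Fb)" by (simp add: PFa PFb sel_def)
    then have "b Fa = b Fb" using bform eq by simp
    then have "s (s (PhiO m Fa)) = s (s (PhiO m Fb))" by (simp add: b_def)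
    then have "PhiO m Fa = PhiO m Fb" by (simp add: inv_s)
    then have "fps_X ^ m = - (fps_X ^ m :: 'a fps)" by (cases e1) (simp_all add: PFa PFb)
    then have "(fps_X ^ m :: 'a fps) $ m = (- (fps_X ^ m)) $ m" by (simp only:)
    then have "(1::'a) = -1" by simp
    then have "(1::'a) + 1 = 0" by (metis add.right_inverse)
    then have "(2::'a) = 0" by (simp only: one_add_one)
    then show False using two by simp
  qed
  show ?thesis
  proof (intro exI conjI allI)
    show "g1 $ 0 = 0" "g2 $ 0 = 0" by (rule g10, rule g20)
    fix F
    show "M.sig \<sigma> (PhiO m F) = tm (\<not> e1) g1 g2 (PhiO m F)"
      using bform[of F] ne by (cases e1) (simp_all add: b_def s_def tm_def sel_def)
  qed
qed

lemma fps_const_m1_mult[simp]: "fps_const (- 1 :: 'a::field) * f = - f"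
  by (simp add: fps_eq_iff)

lemma fcong_1_triv: "f $ 0 = 0 \<Longrightarrow> g $ 0 = 0 \<Longrightarrow> fcong 1 f g"
  by (simp add: fcong_def)

lemma inv_pack:
  fixes u :: "'a::field fps"
  assumes "u $ 0 = 0" "u $ 1 \<noteq> 0"
  shows "fps_inv u $ 0 = 0" "u oo fps_inv u = fps_X" "fps_inv u oo u = fps_X"
  using assms by (simp_all add: fps_inv_right fps_inv)

lemma odd_case:
  fixes \<sigma> :: "'a::field fps fps set \<Rightarrow> 'a fps fps set"
  assumes r: "r + 1 = 2 * m" and two: "of_nat 2 \<noteq> (0::'a)" and inv: "nontriv_involution r \<sigma>"
  defines "Good \<equiv> \<lambda>Gx Gy. \<exists>\<tau>. kalg_aut r \<tau> \<and>
      \<tau> (\<sigma> (inv_into (carrier (A_ring r)) \<tau> (cls r Xv))) = cls r Gx \<and>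
      \<tau> (\<sigma> (inv_into (carrier (A_ring r)) \<tau> (cls r Yv))) = cls r Gy"
  shows "(m \<ge> 2 \<and> (Good Xv (- Yv) \<or> Good (- Xv) Yv \<or> Good (- Xv) (- Yv))) \<or>
         (m = 1 \<and> (Good Xv (- Yv) \<or> Good (- Xv) (- Yv) \<or> Good Yv Xv))"
proof -
  have m1: "m \<ge> 1" using r by simp
  have two': "(2::'a) \<noteq> 0" using two by simp
  have MO: "model r (PhiO m :: 'a fps fps \<Rightarrow> 'a pr)" by (rule model_odd[OF r two])
  interpret M: model r "PhiO m :: 'a fps fps \<Rightarrow> 'a pr" by (rule MO)
  have k: "kalg_aut r \<sigma>" using inv by (simp add: nontriv_involution_def)
  obtain sws g1 g2 where g10: "g1 $ 0 = 0" and g20: "g2 $ 0 = 0"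
    and sform: "\<And>F. M.sig \<sigma> (PhiO m F) = tm sws g1 g2 (PhiO m F)"
    using odd_structure[OF r two inv] by blast
  have fin: "Good Gx Gy"
    if p: "tA $ 0 = 0" "tB $ 0 = 0" "uA $ 0 = 0" "uB $ 0 = 0"
      "uA oo tA = fps_X" "tA oo uA = fps_X" "uB oo tB = fps_X" "tB oo uB = fps_X"
      "fcong m tA tB" "fcong m uA uB"
      "\<And>x. tm sw tA tB (tm sws g1 g2 (tm sw (if sw then uB else uA) (if sw then uA else uB) x)) = tm swr eA eB x"
      "tm swr eA eB (PhiO m Xv) = PhiO m Gx" "tm swr eA eB (PhiO m Yv) = PhiO m Gy"
    for sw tA tB uA uB swr eA eB Gx Gy
  proof -
    obtain \<tau> where "kalg_aut r \<tau>" and "\<forall>F G. tm swr eA eB (PhiO m F) = PhiO m G \<longrightarrow>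
           \<tau> (\<sigma> (inv_into (carrier (A_ring r)) \<tau> (cls r F))) = cls r G"
      using odd_finish[OF MO m1 two k sform p(1-4) g10 g20 p(5-11)] by blast
    then show ?thesis unfolding Good_def using p(12,13) by blast
  qed
  define s where "s = M.sig \<sigma>"
  have inv_s: "s (s (PhiO m F)) = PhiO m F" for F
    unfolding s_def by (rule M.sig_invol[OF inv])
  have sx: "s (PhiO m Xv) = Pr g1 g2"
    using sform[of Xv] by (cases sws) (simp_all add: s_def tm_def PhiO_simps[OF m1] g10 g20)
  obtain G1 where G1: "Pr g1 g2 = PhiO m G1" using M.sig_in[OF k, of Xv] sx by (auto simp: s_def)
  have cg: "fcong m g1 g2" using PhiO_S2[OF m1, of G1] unfolding G1[symmetric] by (simp add: S2_def)
  have ssx: "tm sws g1 g2 (Pr g1 g2) = Pr fps_X fps_X"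
    using inv_s[of Xv] sx G1 sform[of G1] by (simp add: s_def PhiO_simps[OF m1])
  define c1 where "c1 = g1 $ 1"
  define c2 where "c2 = g2 $ 1"
  have c12: "m \<ge> 2 \<Longrightarrow> c1 = c2" using cg by (simp add: fcong_def c1_def c2_def)
  show ?thesis
  proof (cases sws)
    case False
    have gg1: "g1 oo g1 = fps_X" and gg2: "g2 oo g2 = fps_X"
      using ssx False by (simp_all add: tm_def)
    have cc1: "c1 * c1 = 1" using compose_nth1[OF g10, of g1] gg1 by (simp add: c1_def)
    have cc2: "c2 * c2 = 1" using compose_nth1[OF g20, of g2] gg2 by (simp add: c2_def)
    define v1 where "v1 = fps_const (inverse 2) * (fps_X + fps_const c1 * g1)"
    define v2 where "v2 = fps_const (inverse 2) * (fps_X + fps_const c2 * g2)"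
    have v1: "v1 $ 0 = 0" "v1 $ 1 = 1" "v1 oo g1 = fps_const c1 * v1"
      using lin[OF g10 gg1 c1_def[symmetric] cc1 two'] by (simp_all add: v1_def)
    have v2: "v2 $ 0 = 0" "v2 $ 1 = 1" "v2 oo g2 = fps_const c2 * v2"
      using lin[OF g20 gg2 c2_def[symmetric] cc2 two'] by (simp_all add: v2_def)
    have v1': "v1 $ 1 \<noteq> 0" and v2': "v2 $ 1 \<noteq> 0" using v1 v2 by simp_all
    note i1 = inv_pack[OF v1(1) v1'] and i2 = inv_pack[OF v2(1) v2']
    have lc1: "(v1 oo g1) oo fps_inv v1 = fps_const c1 * fps_X" by (rule lin_conj[OF g10 v1(1) v1' v1(3)])
    have lc2: "(v2 oo g2) oo fps_inv v2 = fps_const c2 * fps_X" by (rule lin_conj[OF g20 v2(1) v2' v2(3)])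
    have z: "fps_inv v1 $ 0 = 0" "fps_inv v2 $ 0 = 0" by simp_all
    have compA: "tm False (fps_inv v1) (fps_inv v2) (tm sws g1 g2 (tm False v1 v2 x)) =
        tm False (fps_const c1 * fps_X) (fps_const c2 * fps_X) x" for x
      using False z v1 v2 g10 g20 lc1 lc2 by (simp add: tm_comp)
    have compA': "tm True (fps_inv v2) (fps_inv v1) (tm sws g1 g2 (tm True v1 v2 x)) =
        tm False (fps_const c2 * fps_X) (fps_const c1 * fps_X) x" for x
      using False z v1 v2 g10 g20 lc1 lc2 by (simp add: tm_comp)
    have triv: False if "c1 = 1" "c2 = 1"
    proof -
      have "g1 = fps_X" by (rule lin_id[OF g10 gg1 _ two']) (use that c1_def in simp)
      moreover have "g2 = fps_X" by (rule lin_id[OF g20 gg2 _ two']) (use that c2_def in simp)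
      ultimately have "M.sig \<sigma> (PhiO m F) = PhiO m F" for F using sform[of F] False by (simp add: tm_id)
      then show False using M.sig_nontriv[OF inv] by simp
    qed
    have c1pm: "c1 = 1 \<or> c1 = -1" by (rule sq1_cases[OF cc1])
    have c2pm: "c2 = 1 \<or> c2 = -1" by (rule sq1_cases[OF cc2])
    show ?thesis
    proof (cases "m \<ge> 2")
      case True
      then have ceq: "c1 = c2" by (rule c12)
      then have cm: "c1 = -1" "c2 = -1" using triv c1pm by auto
      have cv: "fcong m v1 v2"
        unfolding v1_def v2_def ceq by (intro fcong_mult fcong_add cg fcong_refl)
      have ci: "fcong m (fps_inv v1) (fps_inv v2)"
        by (rule fps_inv_cong[OF v1(1) v1' v2(1) v2' cv])
      have G: "Good (- Xv) (if even m then Yv else - Yv)"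
      proof (rule fin[where sw = False and swr = False and eA = "- fps_X" and eB = "- fps_X"])
        show "tm False (- fps_X) (- fps_X) (PhiO m (Xv::'a fps fps)) = PhiO m (- Xv)" by (rule tm_vals(6)[OF m1])
        show "tm False (- fps_X) (- fps_X) (PhiO m (Yv::'a fps fps)) = PhiO m (if even m then Yv else - Yv)"
        proof (cases "even m")
          case True then show ?thesis using m1 by (simp add: tm_def PhiO_simps pr_eq_iff fps_X_power_compose fps_compose_uminus)
        next
          case False then show ?thesis using m1 by (simp add: tm_def PhiO_simps PhiO_neg pr_eq_iff fps_X_power_compose fps_compose_uminus)
        qed
        show "tm False (fps_inv v1) (fps_inv v2) (tm sws g1 g2 (tm False (if False then v2 else v1) (if False then v1 else v2) x)) =
          tm False (- fps_X) (- fps_X) x" for x using compA[of x] cm by simp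
      qed (use i1 i2 ci cv v1 v2 in auto)
      then show ?thesis using True by (cases "even m") auto
    next
      case False
      then have m1': "m = 1" using m1 by simp
      have cv: "fcong m v1 v2" and cv': "fcong m v2 v1" using m1' v1 v2 by (simp_all add: fcong_def)
      have ci: "fcong m (fps_inv v1) (fps_inv v2)" and ci': "fcong m (fps_inv v2) (fps_inv v1)"
        using m1' by (simp_all add: fcong_def)
      consider "c1 = -1" "c2 = -1" | "c1 = 1" "c2 = -1" | "c1 = -1" "c2 = 1"
        using c1pm c2pm triv by blast
      then show ?thesis
      proof cases
        case 1
        have "Good (- Xv) (- Yv)"
        proof (rule fin[where sw = False and swr = False and eA = "- fps_X" and eB = "- fps_X"])
          show "tm False (- fps_X) (- fps_X) (PhiO m (Xv::'a fps fps)) = PhiO m (- Xv)" by (rule tm_vals(6)[OF m1])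
          show "tm False (- fps_X) (- fps_X) (PhiO m (Yv::'a fps fps)) = PhiO m (- Yv)"
            using tm_vals(8)[OF m1] m1' by simp
          show "tm False (fps_inv v1) (fps_inv v2) (tm sws g1 g2 (tm False (if False then v2 else v1) (if False then v1 else v2) x)) =
            tm False (- fps_X) (- fps_X) x" for x using compA[of x] 1 by simp
        qed (use i1 i2 ci cv v1 v2 in auto)
        then show ?thesis using m1' by auto
      next
        case 2
        have "Good Yv Xv"
        proof (rule fin[where sw = False and swr = False and eA = "fps_X" and eB = "- fps_X"])
          show "tm False fps_X (- fps_X) (PhiO m (Xv::'a fps fps)) = PhiO m Yv" by (rule tm_vals(9)[OF m1 m1'])
          show "tm False fps_X (- fps_X) (PhiO m (Yv::'a fps fps)) = PhiO m Xv" by (rule tm_vals(10)[OF m1 m1'])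
          show "tm False (fps_inv v1) (fps_inv v2) (tm sws g1 g2 (tm False (if False then v2 else v1) (if False then v1 else v2) x)) =
            tm False fps_X (- fps_X) x" for x using compA[of x] 2 by simp
        qed (use i1 i2 ci cv v1 v2 in auto)
        then show ?thesis using m1' by auto
      next
        case 3
        have "Good Yv Xv"
        proof (rule fin[where sw = True and swr = False and eA = "fps_X" and eB = "- fps_X"
              and tA = "fps_inv v2" and tB = "fps_inv v1" and uA = v2 and uB = v1])
          show "tm False fps_X (- fps_X) (PhiO m (Xv::'a fps fps)) = PhiO m Yv" by (rule tm_vals(9)[OF m1 m1'])
          show "tm False fps_X (- fps_X) (PhiO m (Yv::'a fps fps)) = PhiO m Xv" by (rule tm_vals(10)[OF m1 m1'])
          show "tm True (fps_inv v2) (fps_inv v1) (tm sws g1 g2 (tm True (if True then v1 else v2) (if True then v2 else v1) x)) =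
            tm False fps_X (- fps_X) x" for x using compA'[of x] 3 by simp
        qed (use i1 i2 ci' cv' v1 v2 in auto)
        then show ?thesis using m1' by auto
      qed
    qed
  next
    case True
    have gg: "g2 oo g1 = fps_X" "g1 oo g2 = fps_X"
      using ssx True by (simp_all add: tm_def)
    have c12m: "c1 * c2 = 1" using compose_nth1[OF g20, of g1] gg(2) by (simp add: c1_def c2_def)
    have cg': "fcong m g2 g1" using cg by (rule fcong_sym)
    have tri: "(uB oo g1) oo fps_inv uA = fps_const e * fps_X" "(uA oo g2) oo fps_inv uB = fps_const e * fps_X"
      if u: "uA $ 0 = 0" "uA $ 1 \<noteq> 0" "uB $ 0 = 0" "uB $ 1 \<noteq> 0" and uB: "uB = fps_const e * (uA oo g2)"
        and ee: "e * e = 1" for uA uB e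
    proof -
      have uAg: "uA oo g2 = fps_const e * uB"
        using uB ee by (simp add: mult.assoc[symmetric])
      show "(uA oo g2) oo fps_inv uB = fps_const e * fps_X"
        unfolding uAg using inv_pack[OF u(3,4)] by (simp add: fps_compose_mult_distrib)
      have "(uB oo g1) oo fps_inv uA = fps_const e * ((uA oo (g2 oo g1)) oo fps_inv uA)"
        unfolding uB using g10 g20 u
        by (simp add: fps_compose_mult_distrib fps_compose_assoc)
      also have "\<dots> = fps_const e * fps_X" using inv_pack[OF u(1,2)] gg by simp
      finally show "(uB oo g1) oo fps_inv uA = fps_const e * fps_X" .
    qed
    have compB: "tm False (fps_inv uA) (fps_inv uB) (tm sws g1 g2 (tm False uA uB x)) =
        tm True ((uB oo g1) oo fps_inv uA) ((uA oo g2) oo fps_inv uB) x"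
      if "uA $ 0 = 0" "uB $ 0 = 0" for uA uB x
      using True that g10 g20 by (simp add: tm_comp)
    show ?thesis
    proof (cases "m \<ge> 2")
      case False
      then have m1': "m = 1" using m1 by simp
      have c2nz: "g2 $ 1 \<noteq> 0" using c12m by (auto simp: c2_def)
      have X1: "(fps_X :: 'a fps) $ 1 \<noteq> 0" by simp
      have "Good Xv (- Yv)"
      proof (rule fin[where sw = False and swr = True and eA = "fps_X" and eB = "fps_X"
            and tA = "fps_inv fps_X" and tB = "fps_inv g2" and uA = fps_X and uB = g2])
        show "tm True fps_X fps_X (PhiO m (Xv::'a fps fps)) = PhiO m Xv" using m1
          by (simp add: tm_def PhiO_simps pr_eq_iff)
        show "tm True fps_X fps_X (PhiO m (Yv::'a fps fps)) = PhiO m (- Yv)" using m1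
          by (simp add: tm_def PhiO_simps PhiO_neg pr_eq_iff)
        show "tm False (fps_inv fps_X) (fps_inv g2) (tm sws g1 g2 (tm False (if False then g2 else fps_X) (if False then fps_X else g2) x)) =
          tm True fps_X fps_X x" for x
          using compB[of fps_X g2 x] tri[of fps_X g2 1] g20 c2nz by simp
      qed (use inv_pack[OF _ X1] inv_pack[OF g20 c2nz] g20 m1' in \<open>auto simp: fcong_def\<close>)
      then show ?thesis using m1' by auto
    next
      case m2: True
      then have ceq: "c1 = c2" by (rule c12)
      define c where "c = c2"
      have cc: "c * c = 1" using c12m ceq by (simp add: c_def)
      have g21: "g2 $ 1 = c" by (simp add: c_def c2_def)
      define uA where "uA = fps_const (inverse 2) * (fps_X + fps_const c * g2)"
      define uB where "uB = fps_const c * (uA oo g2)"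
      have uA0: "uA $ 0 = 0" by (simp add: uA_def g20)
      have "uA $ 1 = inverse 2 * (1 + c * c)" using g21 by (simp add: uA_def)
      then have uA1: "uA $ 1 = 1" using cc two' by simp
      have uB0: "uB $ 0 = 0" by (simp add: uB_def uA0)
      have "uB $ 1 = c * (uA $ 1 * c)" using compose_nth1[OF g20, of uA] g21 by (simp add: uB_def)
      then have uB1: "uB $ 1 = 1" using uA1 cc by simp
      have uA1': "uA $ 1 \<noteq> 0" and uB1': "uB $ 1 \<noteq> 0" using uA1 uB1 by simp_all
      have cu: "fcong m uA uB"
      proof -
        have "uA oo g2 = fps_const (inverse 2) * (g2 + fps_const c * (g2 oo g2))"
          by (simp add: uA_def fps_compose_mult_distrib[OF g20] fps_compose_add_distrib g20)
        then have "uB = fps_const (inverse 2) * (fps_const (c * c) * (g2 oo g2) + fps_const c * g2)"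
          by (simp add: uB_def algebra_simps)
        then have e: "uB = fps_const (inverse 2) * ((g2 oo g2) + fps_const c * g2)" using cc by simp
        have "fcong m (g2 oo g2) (g2 oo g1)" by (rule fcong_compose_right[OF cg'])
        then have "fcong m (g2 oo g2) fps_X" using gg by simp
        then have "fcong m uB uA" unfolding e uA_def
          by (intro fcong_mult fcong_add fcong_refl)
        then show ?thesis by (rule fcong_sym)
      qed
      have ci: "fcong m (fps_inv uA) (fps_inv uB)" by (rule fps_inv_cong[OF uA0 uA1' uB0 uB1' cu])
      have T: "(uB oo g1) oo fps_inv uA = fps_const c * fps_X" "(uA oo g2) oo fps_inv uB = fps_const c * fps_X"
        using tri[OF uA0 uA1' uB0 uB1' uB_def cc] by simp_all
      have G: "Good (if c = 1 then Xv else - Xv) (if c = 1 \<or> even m then - Yv else Yv)"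
      proof (rule fin[where sw = False and swr = True and eA = "fps_const c * fps_X" and eB = "fps_const c * fps_X"
            and tA = "fps_inv uA" and tB = "fps_inv uB" and uA = uA and uB = uB])
        have cpm: "c = 1 \<or> c = -1" by (rule sq1_cases[OF cc])
        show "tm True (fps_const c * fps_X) (fps_const c * fps_X) (PhiO m (Xv::'a fps fps)) =
            PhiO m (if c = 1 then Xv else - Xv)"
          using cpm m1 by (auto simp: tm_def PhiO_simps PhiO_neg pr_eq_iff)
        show "tm True (fps_const c * fps_X) (fps_const c * fps_X) (PhiO m (Yv::'a fps fps)) =
            PhiO m (if c = 1 \<or> even m then - Yv else Yv)"
          using cpm m1 by (cases "even m")
            (auto simp: tm_def PhiO_simps PhiO_neg pr_eq_iff fps_X_power_compose fps_compose_uminus)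
        show "tm False (fps_inv uA) (fps_inv uB) (tm sws g1 g2 (tm False (if False then uB else uA) (if False then uA else uB) x)) =
          tm True (fps_const c * fps_X) (fps_const c * fps_X) x" for x
          using compB[OF uA0 uB0, of x] T by simp
      qed (use inv_pack[OF uA0 uA1'] inv_pack[OF uB0 uB1'] uA0 uB0 ci cu in auto)
      have cpm: "c = 1 \<or> c = -1" by (rule sq1_cases[OF cc])
      have z2: "(0::'a) \<noteq> 2" using two' by metis
      from cpm show ?thesis using G m2 z2 by (cases "even m") auto
    qed
  qed
qed



theorem proposition1p1p3:
  fixes r :: nat and \<sigma> :: "'a::field fps fps set \<Rightarrow> 'a fps fps set"
  assumes "alg_closed_field TYPE('a)"
    and "of_nat 2 \<noteq> (0::'a)" and "of_nat (r + 1) \<noteq> (0::'a)"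
    and "nontriv_involution r \<sigma>"
  shows "\<exists>\<tau>. kalg_aut r \<tau> \<and>
    (let \<rho> = (\<lambda>a. \<tau> (\<sigma> (inv_into (carrier (A_ring r)) \<tau> a))) in
      (even r \<and> \<rho> (cls r Xv) = cls r Xv \<and> \<rho> (cls r Yv) = cls r (- Yv))
    \<or> (odd r \<and> r \<ge> 3 \<and>
        ((\<rho> (cls r Xv) = cls r Xv \<and> \<rho> (cls r Yv) = cls r (- Yv))
       \<or> (\<rho> (cls r Xv) = cls r (- Xv) \<and> \<rho> (cls r Yv) = cls r Yv)
       \<or> (\<rho> (cls r Xv) = cls r (- Xv) \<and> \<rho> (cls r Yv) = cls r (- Yv))))
    \<or> (r = 1 \<and>
        ((\<rho> (cls r Xv) = cls r Xv \<and> \<rho> (cls r Yv) = cls r (- Yv))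
       \<or> (\<rho> (cls r Xv) = cls r (- Xv) \<and> \<rho> (cls r Yv) = cls r (- Yv))
       \<or> (\<rho> (cls r Xv) = cls r Yv \<and> \<rho> (cls r Yv) = cls r Xv))))"
proof -
  have two: "of_nat 2 \<noteq> (0::'a)" using assms(2) .
  have inv: "nontriv_involution r \<sigma>" using assms(4) .
  show ?thesis
  proof (cases "even r")
    case True
    then show ?thesis using even_case[OF True two inv] by (auto simp: Let_def)
  next
    case False
    then obtain m where r: "r + 1 = 2 * m" by (metis evenE odd_even_add odd_one)
    note oc = odd_case[OF r two inv]
    have r3: "m \<ge> 2 \<Longrightarrow> r \<ge> 3" using r by simp
    have r1: "m = 1 \<Longrightarrow> r = 1" using r by simp
    from oc show ?thesis
    proof (elim disjE conjE exE)
      fix \<tau> assume "m \<ge> 2" "kalg_aut r \<tau>"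
        "\<tau> (\<sigma> (inv_into (carrier (A_ring r)) \<tau> (cls r Xv))) = cls r Xv"
        "\<tau> (\<sigma> (inv_into (carrier (A_ring r)) \<tau> (cls r Yv))) = cls r (- Yv)"
      then show ?thesis using False r3 by (intro exI[of _ \<tau>]) (simp add: Let_def)
    next
      fix \<tau> assume "m \<ge> 2" "kalg_aut r \<tau>"
        "\<tau> (\<sigma> (inv_into (carrier (A_ring r)) \<tau> (cls r Xv))) = cls r (- Xv)"
        "\<tau> (\<sigma> (inv_into (carrier (A_ring r)) \<tau> (cls r Yv))) = cls r Yv"
      then show ?thesis using False r3 by (intro exI[of _ \<tau>]) (simp add: Let_def)
    next
      fix \<tau> assume "m \<ge> 2" "kalg_aut r \<tau>"
        "\<tau> (\<sigma> (inv_into (carrier (A_ring r)) \<tau> (cls r Xv))) = cls r (- Xv)"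
        "\<tau> (\<sigma> (inv_into (carrier (A_ring r)) \<tau> (cls r Yv))) = cls r (- Yv)"
      then show ?thesis using False r3 by (intro exI[of _ \<tau>]) (simp add: Let_def)
    next
      fix \<tau> assume "m = 1" "kalg_aut r \<tau>"
        "\<tau> (\<sigma> (inv_into (carrier (A_ring r)) \<tau> (cls r Xv))) = cls r Xv"
        "\<tau> (\<sigma> (inv_into (carrier (A_ring r)) \<tau> (cls r Yv))) = cls r (- Yv)"
      then show ?thesis using r1 by (intro exI[of _ \<tau>]) (simp add: Let_def)
    next
      fix \<tau> assume "m = 1" "kalg_aut r \<tau>"
        "\<tau> (\<sigma> (inv_into (carrier (A_ring r)) \<tau> (cls r Xv))) = cls r (- Xv)"
        "\<tau> (\<sigma> (inv_into (carrier (A_ring r)) \<tau> (cls r Yv))) = cls r (- Yv)"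
      then show ?thesis using r1 by (intro exI[of _ \<tau>]) (simp add: Let_def)
    next
      fix \<tau> assume "m = 1" "kalg_aut r \<tau>"
        "\<tau> (\<sigma> (inv_into (carrier (A_ring r)) \<tau> (cls r Xv))) = cls r Yv"
        "\<tau> (\<sigma> (inv_into (carrier (A_ring r)) \<tau> (cls r Yv))) = cls r Xv"
      then show ?thesis using r1 by (intro exI[of _ \<tau>]) (simp add: Let_def)
    qed
  qed
qed



end
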